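(* Let $d > 8$ be an integer. Consider the game in which Nora and Wanda choose the coefficients of a degree $d$ polynomial from $\mathbb{Q}$. If Nora makes the last move, then she can ensure that the final polynomial has no root in $\overline{\mathbb{Q}}^{\mathrm{ab}}$, the maximal abelian extension of $\mathbb{Q}$.
   Context: The game: Nora and Wanda alternately choose coefficients of $f(x) = a_d x^d + \cdots + a_0$; on each move the current player picks a not-yet-chosen coefficient and assigns it a rational value, subject to $a_d \neq 0$, $a_0 \neq 0$. The maximal abelian extension $\overline{\mathbb{Q}}^{\mathrm{ab}}$ is the union (in a fixed algebraic closure) of all finite abelian extensions of $\mathbb{Q}$, equivalently the union of all cyclotomic fields $\mathbb{Q}(\zeta_n)$. *)

theory Defs
  imports Complex_Main "HOL-Computational_Algebra.Polynomial"
begin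

text \<open>We take the fixed algebraic closure of Q to be the algebraic numbers inside C.\<close>

definition is_subfield :: "complex set \<Rightarrow> bool" where
  "is_subfield K \<longleftrightarrow> 0 \<in> K \<and> 1 \<in> K \<and>
     (\<forall>x\<in>K. \<forall>y\<in>K. x + y \<in> K \<and> x * y \<in> K) \<and>
     (\<forall>x\<in>K. - x \<in> K) \<and> (\<forall>x\<in>K. x \<noteq> 0 \<longrightarrow> inverse x \<in> K)"

definition cyclotomic_field :: "nat \<Rightarrow> complex set" where
  "cyclotomic_field n =
     \<Inter> {K. is_subfield K \<and> cis (2 * pi / real n) \<in> K}"

definition Qab :: "complex set" where
  "Qab = (\<Union>n\<in>{n. n > 0}. cyclotomic_field n)"

text \<open>A position is a partial assignment of rational values to coefficient indices 0..d.\<close>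
definition legal_move :: "nat \<Rightarrow> (nat \<Rightarrow> rat option) \<Rightarrow> nat \<Rightarrow> rat \<Rightarrow> bool" where
  "legal_move d s i v \<longleftrightarrow> i \<le> d \<and> s i = None \<and> ((i = 0 \<or> i = d) \<longrightarrow> v \<noteq> 0)"

definition final_poly :: "nat \<Rightarrow> (nat \<Rightarrow> rat option) \<Rightarrow> rat poly" where
  "final_poly d s = (\<Sum>i\<le>d. monom (the (s i)) i)"

definition nora_goal :: "nat \<Rightarrow> (nat \<Rightarrow> rat option) \<Rightarrow> bool" where
  "nora_goal d s \<longleftrightarrow>
     (\<forall>z::complex. poly (map_poly of_rat (final_poly d s)) z = 0 \<longrightarrow> z \<notin> Qab)"

text \<open>nora_wins d r s: with r moves remaining from position s, Nora (who makes the
  last move, i.e. moves exactly when an odd number of moves remain) can force a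
  final polynomial with no root in Q^ab.\<close>
fun nora_wins :: "nat \<Rightarrow> nat \<Rightarrow> (nat \<Rightarrow> rat option) \<Rightarrow> bool" where
  "nora_wins d 0 s = nora_goal d s"
| "nora_wins d (Suc r) s =
     (if odd (Suc r)
      then (\<exists>i v. legal_move d s i v \<and> nora_wins d r (s(i := Some v)))
      else (\<forall>i v. legal_move d s i v \<longrightarrow> nora_wins d r (s(i := Some v))))"

end

theory Submission
  imports "Berlekamp_Zassenhaus.Factor_Bound" Defs
begin

interpretation of_rat_poly_hom: map_poly_idom_hom "of_rat :: rat \<Rightarrow> 'a::field_char_0" ..

definition ev :: "rat poly \<Rightarrow> 'a::field_char_0 \<Rightarrow> 'a" where "ev q x = poly (map_poly of_rat q) x"
lemma ev_mult[simp]: "ev (p*q) x = ev p x * ev q x" unfolding ev_def by (simp add: hom_distribs)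
lemma ev_add[simp]: "ev (p+q) x = ev p x + ev q x" unfolding ev_def by (simp add: hom_distribs)
lemma ev_diff[simp]: "ev (p-q) x = ev p x - ev q x" unfolding ev_def by (simp add: hom_distribs)
lemma ev_uminus[simp]: "ev (-p) x = - ev p x" unfolding ev_def by (simp add: hom_distribs)
lemma ev_0[simp]: "ev 0 x = 0" unfolding ev_def by simp
lemma ev_1[simp]: "ev 1 x = 1" unfolding ev_def by simp
lemma ev_monom[simp]: "ev (Polynomial.monom c j) x = of_rat c * x ^ j" unfolding ev_def by (simp add: poly_monom)
lemma ev_pcompose[simp]: "ev (p \<circ>\<^sub>p q) x = ev p (ev q x)" unfolding ev_def by (simp add: of_rat_hom.map_poly_pcompose poly_pcompose)
lemma ev_smult[simp]: "ev (smult c p) x = of_rat c * ev p x" unfolding ev_def by (simp add: hom_distribs)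
lemma ev_pCons[simp]: "ev (pCons a p) x = of_rat a + x * ev p x" unfolding ev_def by (simp add: hom_distribs)
lemma ev_const: "ev [:c:] x = of_rat c" by simp
lemma ev_power[simp]: "ev (p ^ j) x = ev p x ^ j" unfolding ev_def by (simp add: hom_distribs)
lemma ev_sum: "ev (sum f A) x = (\<Sum>a\<in>A. ev (f a) x)" unfolding ev_def by (simp add: hom_distribs poly_sum)
lemma ev_prod: "ev (prod f A) x = (\<Prod>a\<in>A. ev (f a) x)" unfolding ev_def by (simp add: hom_distribs poly_prod)

lemma ev_dvd: assumes "p dvd q" "ev p x = 0" shows "ev q x = 0"
  using assms by (auto elim!: dvdE)

lemma unit_ev_nonzero: assumes "is_unit (g :: rat poly)" shows "ev g x \<noteq> 0"
proof -
  have "g \<noteq> 0" using assms by auto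
  with assms have "degree g = 0" using is_unit_iff_degree by blast
  then obtain c where g: "g = [:c:]" by (metis degree_eq_zeroE)
  with \<open>g \<noteq> 0\<close> have "c \<noteq> 0" by auto
  thus ?thesis using g by simp
qed

lemma irr_min:
  fixes m h :: "rat poly" and z :: "'a::field_char_0"
  assumes irr: "irreducible m" and mz: "ev m z = 0" and hz: "ev h z = 0"
  shows "m dvd h"
proof -
  let ?g = "gcd m h"
  have "?g = fst (bezout_coefficients m h) * m + snd (bezout_coefficients m h) * h"
    by (simp add: bezout_coefficients_fst_snd)
  hence "ev ?g z = 0" using mz hz by simp
  hence nu: "\<not> is_unit ?g" using unit_ev_nonzero by blast
  have "?g dvd m" by simp
  then obtain c where mc: "m = ?g * c" by (elim dvdE)
  from irreducibleD[OF irr mc] nu have "is_unit c" by auto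
  have "m dvd ?g * c" using mc by simp
  hence "m dvd ?g" using dvd_mult_unit_iff[OF \<open>is_unit c\<close>] by simp
  thus ?thesis by (metis dvd_trans gcd_dvd2)
qed


lemma exists_irr_factor:
  fixes P :: "rat poly" and z :: "'a::field_char_0"
  assumes "P \<noteq> 0" "ev P z = 0"
  shows "\<exists>m. irreducible m \<and> m dvd P \<and> ev m z = 0"
  using assms
proof (induction "degree P" arbitrary: P rule: less_induct)
  case less
  show ?case
  proof (cases "irreducible P")
    case True thus ?thesis using less by auto
  next
    case False
    have nu: "\<not> is_unit P" using unit_ev_nonzero less.prems by blast
    from False less.prems(1) nu obtain a b where ab: "P = a * b" "\<not> is_unit a" "\<not> is_unit b"
      unfolding irreducible_def by auto
    have a0: "a \<noteq> 0" and b0: "b \<noteq> 0" using ab less.prems(1) by auto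
    have da: "degree a > 0" using ab(2) a0 is_unit_iff_degree by blast
    have db: "degree b > 0" using ab(3) b0 is_unit_iff_degree by blast
    have dP: "degree P = degree a + degree b" using ab(1) a0 b0 degree_mult_eq by blast
    have "ev a z * ev b z = 0" using less.prems(2) ab(1) by simp
    hence "ev a z = 0 \<or> ev b z = 0" by simp
    thus ?thesis
    proof
      assume "ev a z = 0"
      from less.hyps[of a] this a0 da db dP obtain m where "irreducible m" "m dvd a" "ev m z = 0" by auto
      thus ?thesis using ab(1) by (metis dvd_mult2)
    next
      assume "ev b z = 0"
      from less.hyps[of b] this b0 da db dP obtain m where "irreducible m" "m dvd b" "ev m z = 0" by auto
      thus ?thesis using ab(1) by (metis dvd_mult)
    qed
  qed
qed

lemma irr_card_roots:
  fixes p :: "rat poly"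
  assumes irr: "irreducible p"
  shows "card {z::complex. ev p z = 0} = degree p"
proof -
  let ?P = "map_poly (of_rat :: rat \<Rightarrow> complex) p"
  have p0: "p \<noteq> 0" using irr by auto
  hence P0: "?P \<noteq> 0" by simp
  have "\<not> is_unit p" using irr unfolding irreducible_def by blast
  hence dp: "degree p > 0" using p0 is_unit_iff_degree by auto
  have "rsquarefree ?P"
    unfolding rsquarefree_roots
  proof (intro allI notI)
    fix a assume a: "poly ?P a = 0 \<and> poly (pderiv ?P) a = 0"
    have "ev p a = 0" using a by (simp add: ev_def)
    moreover have "ev (pderiv p) a = 0" using a by (simp add: ev_def of_rat_hom.map_poly_pderiv)
    ultimately have "p dvd pderiv p" using irr_min[OF irr] by blast
    moreover have "pderiv p \<noteq> 0" using dp by (simp add: pderiv_eq_0_iff)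
    ultimately have "degree p \<le> degree (pderiv p)" by (simp add: dvd_imp_degree_le)
    moreover have "degree (pderiv p) < degree p" using dp by (simp add: degree_pderiv)
    ultimately show False by simp
  qed
  hence "card {x. poly ?P x = 0} = degree ?P" using rsquarefree_card_degree[OF P0] by simp
  thus ?thesis by (simp add: ev_def)
qed


definition zeta :: "nat \<Rightarrow> complex" where "zeta n = cis (2 * pi / real n)"

lemma zeta_pow: "zeta n ^ j = cis (2 * pi * real j / real n)"
  unfolding zeta_def DeMoivre by (simp add: field_simps)

lemma zeta_pow_n: "n > 0 \<Longrightarrow> zeta n ^ n = 1"
  unfolding zeta_pow by simp

lemma zeta_pow_mod: assumes "n > 0" shows "zeta n ^ j = zeta n ^ (j mod n)"
proof -
  have "zeta n ^ j = zeta n ^ (n * (j div n) + j mod n)" by simp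
  also have "\<dots> = (zeta n ^ n) ^ (j div n) * zeta n ^ (j mod n)" by (simp only: power_add power_mult)
  finally have "zeta n ^ j = (zeta n ^ n) ^ (j div n) * zeta n ^ (j mod n)" .
  thus ?thesis using zeta_pow_n[OF assms] by simp
qed

lemma zeta_pow_eq_1: assumes n: "n > 0" shows "zeta n ^ j = 1 \<longleftrightarrow> n dvd j"
proof
  assume "n dvd j"
  then obtain c where "j = n * c" by (elim dvdE)
  thus "zeta n ^ j = 1" using zeta_pow_n[OF n] by (simp add: power_mult)
next
  assume h: "zeta n ^ j = 1"
  have inj: "inj_on (\<lambda>k. cis (2 * pi * real k / real n)) {..<n}"
    using bij_betw_roots_unity[OF n] by (simp add: bij_betw_def)
  have "(\<lambda>k. cis (2 * pi * real k / real n)) (j mod n) = (\<lambda>k. cis (2 * pi * real k / real n)) 0"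
    using h zeta_pow_mod[OF n, of j] unfolding zeta_pow by simp
  hence "j mod n = 0" using inj_onD[OF inj] n by simp
  thus "n dvd j" by auto
qed

lemma root_unity_zeta: assumes n: "n > 0" and z: "z ^ n = 1" shows "\<exists>j<n. z = zeta n ^ j"
proof -
  have "z \<in> (\<lambda>k. cis (2 * pi * real k / real n)) ` {..<n}"
    using bij_betw_roots_unity[OF n] z by (simp add: bij_betw_def)
  thus ?thesis unfolding zeta_pow by auto
qed

lemma sym_coeff:
  fixes e :: "'b \<Rightarrow> rat poly"
  assumes "finite T"
  shows "\<exists>E::nat \<Rightarrow> rat poly. \<forall>(x::complex) i. coeff (\<Prod>u\<in>T. [:-(ev (e u) x), 1:]) i = ev (E i) x"
  using assms
proof (induction T rule: finite_induct)
  case empty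
  show ?case by (rule exI[of _ "\<lambda>i. if i = 0 then 1 else 0"]) (auto simp: coeff_1)
next
  case (insert u T)
  then obtain E where E: "\<forall>(x::complex) i. coeff (\<Prod>u\<in>T. [:-(ev (e u) x), 1:]) i = ev (E i) x" by blast
  define E' where "E' i = - e u * E i + (case i of 0 \<Rightarrow> 0 | Suc j \<Rightarrow> E j)" for i
  show ?case
  proof (rule exI[of _ E'], intro allI)
    fix x :: complex and i
    let ?P = "\<Prod>u\<in>T. [:-(ev (e u) x), 1:]"
    have "(\<Prod>u\<in>insert u T. [:-(ev (e u) x), 1:]) = [:-(ev (e u) x), 1:] * ?P" using insert by simp
    also have "\<dots> = smult (-(ev (e u) x)) ?P + pCons 0 ?P" by (simp add: mult_pCons_left)
    finally have eq: "(\<Prod>u\<in>insert u T. [:-(ev (e u) x), 1:]) = smult (-(ev (e u) x)) ?P + pCons 0 ?P" .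
    show "coeff (\<Prod>u\<in>insert u T. [:-(ev (e u) x), 1:]) i = ev (E' i) x"
      unfolding eq E'_def using E by (cases i) (auto simp: coeff_pCons)
  qed
qed

lemma of_rat_decomp: fixes r :: rat obtains a b :: int where "b \<noteq> 0" "r = of_int a / of_int b"
proof -
  obtain a b where q: "quotient_of r = (a, b)" by force
  have "b > 0" using quotient_of_denom_pos[OF q] .
  moreover have "r = of_int a / of_int b" using quotient_of_div[OF q] .
  ultimately show ?thesis using that[of b a] by simp
qed

lemma of_rat_Reals: "(of_rat r :: complex) \<in> \<real>"
proof -
  obtain a b :: int where "r = of_int a / of_int b" using of_rat_decomp by blast
  thus ?thesis by (simp add: of_rat_divide)
qed

lemma of_real_of_rat: "of_real (of_rat r :: real) = (of_rat r :: complex)"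
proof -
  obtain a b :: int where "r = of_int a / of_int b" using of_rat_decomp by blast
  thus ?thesis by (simp add: of_rat_divide)
qed

locale cyc =
  fixes n :: nat and m :: "rat poly"
  assumes npos: "n > 0" and irr: "irreducible m" and mroot: "ev m (zeta n) = 0"
begin

definition R :: "complex set" where "R = {z. ev m z = 0}"

lemma m0: "m \<noteq> 0" using irr by auto

lemma finR: "finite R"
proof -
  have "map_poly (of_rat :: rat \<Rightarrow> complex) m \<noteq> 0" using m0 by simp
  thus ?thesis unfolding R_def ev_def by (rule poly_roots_finite)
qed

lemma cardR: "card R = degree m" unfolding R_def using irr_card_roots[OF irr] .

lemma degm: "degree m > 0"
proof -
  have "\<not> is_unit m" using irr unfolding irreducible_def by blast
  thus ?thesis using m0 is_unit_iff_degree by auto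
qed

lemma zeta_R: "zeta n \<in> R" unfolding R_def using mroot by simp

lemma R_prim: assumes w: "w \<in> R" and wi: "w ^ i = 1" shows "n dvd i"
proof -
  have "ev (Polynomial.monom 1 i - 1) w = 0" using wi by simp
  hence "m dvd (Polynomial.monom 1 i - 1)" using irr_min[OF irr] w unfolding R_def by blast
  hence "ev (Polynomial.monom 1 i - 1) (zeta n) = 0" using ev_dvd mroot by blast
  hence "zeta n ^ i = 1" by simp
  thus ?thesis using zeta_pow_eq_1[OF npos] by simp
qed

lemma R_unity: assumes w: "w \<in> R" shows "w ^ n = 1"
proof -
  have "ev (Polynomial.monom 1 n - 1) (zeta n) = 0" using zeta_pow_n[OF npos] by simp
  hence "m dvd (Polynomial.monom 1 n - 1)" using irr_min[OF irr mroot] by blast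
  hence "ev (Polynomial.monom 1 n - 1) w = 0" using ev_dvd w unfolding R_def by blast
  thus ?thesis by simp
qed

lemma R_closed: assumes u: "u \<in> R" and w: "w \<in> R" and uj: "u = zeta n ^ j" shows "w ^ j \<in> R"
proof -
  have "ev (m \<circ>\<^sub>p Polynomial.monom 1 j) (zeta n) = 0" using u uj unfolding R_def by simp
  hence "m dvd (m \<circ>\<^sub>p Polynomial.monom 1 j)" using irr_min[OF irr mroot] by blast
  hence "ev (m \<circ>\<^sub>p Polynomial.monom 1 j) w = 0" using ev_dvd w unfolding R_def by blast
  thus ?thesis unfolding R_def by simp
qed

definition ex :: "complex \<Rightarrow> nat" where "ex u = (SOME j. j < n \<and> u = zeta n ^ j)"

lemma ex: assumes "u \<in> R" shows "ex u < n" "u = zeta n ^ ex u"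
proof -
  have "\<exists>j<n. u = zeta n ^ j" using root_unity_zeta[OF npos R_unity[OF assms]] .
  hence "ex u < n \<and> u = zeta n ^ ex u" unfolding ex_def by (rule someI_ex)
  thus "ex u < n" "u = zeta n ^ ex u" by auto
qed

lemma R_nz: assumes "w \<in> R" shows "w \<noteq> 0"
proof
  assume "w = 0"
  moreover have "w ^ n = 1" using R_unity[OF assms] .
  ultimately show False using npos by (simp add: zero_power)
qed

lemma pow_inj: assumes w: "w \<in> R" and a: "a < n" and b: "b < n" and eq: "w ^ a = w ^ b" shows "a = b"
proof -
  have wnz: "w \<noteq> 0" using R_nz[OF w] .
  have key: "a = b" if ab: "b \<le> a" "a < n" "w ^ a = w ^ b" for a b :: nat
  proof -
    have "w ^ a = w ^ (a - b) * w ^ b" using ab(1) by (simp add: power_add[symmetric])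
    hence "w ^ (a - b) = 1" using ab(3) wnz by simp
    hence dv: "n dvd (a - b)" using R_prim[OF w] by blast
    have "a - b = 0"
    proof (rule ccontr)
      assume "a - b \<noteq> 0"
      hence "n \<le> a - b" using dv by (simp add: dvd_imp_le)
      thus False using ab(2) by simp
    qed
    thus ?thesis using ab(1) by simp
  qed
  show ?thesis
  proof (cases "b \<le> a")
    case True thus ?thesis using key a eq by blast
  next
    case False thus ?thesis using key[of a b] b eq by simp
  qed
qed

lemma perm: assumes w: "w \<in> R" shows "bij_betw (\<lambda>u. u ^ ex w) R R"
proof -
  have eq: "u ^ ex w = w ^ ex u" if "u \<in> R" for u
  proof -
    have "u ^ ex w = (zeta n ^ ex u) ^ ex w" using ex(2)[OF that] by simp
    also have "\<dots> = (zeta n ^ ex w) ^ ex u" by (simp add: power_mult[symmetric] mult.commute)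
    also have "\<dots> = w ^ ex u" using ex(2)[OF w] by simp
    finally show ?thesis .
  qed
  have into: "(\<lambda>u. u ^ ex w) ` R \<subseteq> R"
  proof
    fix y assume "y \<in> (\<lambda>u. u ^ ex w) ` R"
    then obtain u where u: "u \<in> R" "y = u ^ ex w" by auto
    thus "y \<in> R" using eq[OF u(1)] R_closed[OF u(1) w ex(2)[OF u(1)]] by simp
  qed
  have inj: "inj_on (\<lambda>u. u ^ ex w) R"
  proof (rule inj_onI)
    fix u v assume u: "u \<in> R" and v: "v \<in> R" and h: "u ^ ex w = v ^ ex w"
    hence "w ^ ex u = w ^ ex v" using eq by simp
    hence "ex u = ex v" using pow_inj[OF w ex(1)[OF u] ex(1)[OF v]] by simp
    thus "u = v" using ex(2)[OF u] ex(2)[OF v] by simp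
  qed
  show ?thesis unfolding bij_betw_def using inj endo_inj_surj[OF finR into inj] by simp
qed

lemma fixed_rat: assumes h: "\<forall>w\<in>R. ev E w = ev E (zeta n)" shows "\<exists>r. ev E (zeta n) = of_rat r"
proof -
  define c where "c = ev E (zeta n)"
  define E' where "E' = E mod m"
  have EE: "E = E div m * m + E'" by (simp add: E'_def)
  have ev_eq: "ev E' w = c" if "w \<in> R" for w
  proof -
    have "ev E w = ev (E div m) w * ev m w + ev E' w" by (subst EE) simp
    also have "ev m w = 0" using that unfolding R_def by simp
    finally show ?thesis using h that unfolding c_def by simp
  qed
  have dE: "degree E' < degree m"
    using degree_mod_less[OF m0, of E] degm unfolding E'_def by auto
  define Q where "Q = map_poly (of_rat :: rat \<Rightarrow> complex) E' - [:c:]"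
  have Qr: "R \<subseteq> {x. poly Q x = 0}" using ev_eq unfolding Q_def ev_def by auto
  have dQ: "degree Q < degree m"
  proof -
    have "degree Q \<le> max (degree (map_poly (of_rat :: rat \<Rightarrow> complex) E')) (degree [:c:])"
      unfolding Q_def by (rule degree_diff_le_max)
    thus ?thesis using dE degm by simp
  qed
  have "Q = 0"
  proof (rule ccontr)
    assume Q0: "Q \<noteq> 0"
    have "card R \<le> card {x. poly Q x = 0}" using Qr poly_roots_finite[OF Q0] by (rule card_mono[rotated])
    also have "\<dots> \<le> degree Q" using card_poly_roots_bound[OF Q0] .
    finally show False using dQ cardR by simp
  qed
  hence "map_poly (of_rat :: rat \<Rightarrow> complex) E' = [:c:]" unfolding Q_def by simp
  hence "coeff (map_poly (of_rat :: rat \<Rightarrow> complex) E') 0 = c" by simp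
  hence "of_rat (coeff E' 0) = c" by simp
  thus ?thesis unfolding c_def by (intro exI[of _ "coeff E' 0"]) simp
qed

lemma transitivity:
  assumes f: "irreducible f" and a: "ev f (ev q (zeta n)) = 0" and g: "ev f \<gamma> = 0"
  shows "\<exists>u\<in>R. \<gamma> = ev q u"
proof -
  define P where "P = (\<Prod>u\<in>R. [:-(ev q u), 1:])"
  obtain E where E: "\<forall>(x::complex) i. coeff (\<Prod>u\<in>R. [:-(ev (q \<circ>\<^sub>p Polynomial.monom 1 (ex u)) x), 1:]) i = ev (E i) x"
    using sym_coeff[OF finR, of "\<lambda>u. q \<circ>\<^sub>p Polynomial.monom 1 (ex u)"] by blast
  have at: "(\<Prod>u\<in>R. [:-(ev (q \<circ>\<^sub>p Polynomial.monom 1 (ex u)) w), 1:]) = P" if w: "w \<in> R" for w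
  proof -
    have "(\<Prod>u\<in>R. [:-(ev (q \<circ>\<^sub>p Polynomial.monom 1 (ex u)) w), 1:]) = (\<Prod>u\<in>R. [:-(ev q (u ^ ex w)), 1:])"
    proof (rule prod.cong[OF refl])
      fix u assume u: "u \<in> R"
      have "w ^ ex u = u ^ ex w"
      proof -
        have "w ^ ex u = (zeta n ^ ex w) ^ ex u" using ex(2)[OF w] by simp
        also have "\<dots> = (zeta n ^ ex u) ^ ex w" by (simp add: power_mult[symmetric] mult.commute)
        also have "\<dots> = u ^ ex w" using ex(2)[OF u] by simp
        finally show ?thesis .
      qed
      thus "[:-(ev (q \<circ>\<^sub>p Polynomial.monom 1 (ex u)) w), 1:] = [:-(ev q (u ^ ex w)), 1:]" by simp
    qed
    also have "\<dots> = P" unfolding P_def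
      by (rule prod.reindex_bij_betw[OF perm[OF w], of "\<lambda>y. [:-(ev q y), 1:]"])
    finally show ?thesis .
  qed
  have coefrat: "\<exists>r. coeff P i = of_rat r" for i
  proof -
    have ci: "coeff P i = ev (E i) w" if "w \<in> R" for w
    proof -
      have "coeff P i = coeff (\<Prod>u\<in>R. [:-(ev (q \<circ>\<^sub>p Polynomial.monom 1 (ex u)) w), 1:]) i" using at[OF that] by simp
      also have "\<dots> = ev (E i) w" using E by blast
      finally show ?thesis .
    qed
    have "\<forall>w\<in>R. ev (E i) w = ev (E i) (zeta n)" using ci zeta_R by metis
    from fixed_rat[OF this] obtain r where "ev (E i) (zeta n) = of_rat r" by blast
    thus ?thesis using ci[OF zeta_R] by auto
  qed
  then obtain r where r: "\<And>i. coeff P i = of_rat (r i)" using choice[of "\<lambda>i r. coeff P i = of_rat r"] by blast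
  define P0 where "P0 = (\<Sum>i\<le>degree P. Polynomial.monom (r i) i)"
  have cP0: "coeff P0 j = (if j \<le> degree P then r j else 0)" for j
    unfolding P0_def by (simp add: coeff_sum coeff_monom)
  have mP0: "map_poly of_rat P0 = P"
  proof (rule poly_eqI)
    fix j
    show "coeff (map_poly of_rat P0) j = coeff P j"
      using r[of j] cP0[of j] by (cases "j \<le> degree P") (auto simp: coeff_eq_0)
  qed
  have evP0: "ev P0 x = poly P x" for x unfolding ev_def mP0 ..
  have "poly P (ev q (zeta n)) = 0"
    unfolding P_def poly_prod using zeta_R finR by (auto simp: prod_zero_iff)
  hence "ev P0 (ev q (zeta n)) = 0" using evP0 by simp
  hence "f dvd P0" using irr_min[OF f a] by blast
  hence "ev P0 \<gamma> = 0" using ev_dvd g by blast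
  hence "poly P \<gamma> = 0" using evP0 by simp
  hence "\<exists>u\<in>R. \<gamma> - ev q u = 0" unfolding P_def poly_prod using finR by (auto simp: prod_zero_iff)
  thus ?thesis by auto
qed

lemma cnj_R: assumes u: "u \<in> R" shows "cnj u = u ^ (n - 1)"
proof -
  have un: "u ^ n = 1" using R_unity[OF u] .
  have "cmod u = 1" using power_eq_1_iff[OF un] npos by simp
  hence "u * cnj u = 1" using complex_norm_square[of u] by simp
  moreover have "u * u ^ (n - 1) = u ^ Suc (n - 1)" by simp
  hence "u * u ^ (n - 1) = 1" using un npos by simp
  ultimately have "u * cnj u = u * u ^ (n - 1)" by simp
  thus ?thesis using R_nz[OF u] by simp
qed

lemma cnj_ev: "cnj (ev q z) = ev q (cnj z)"
  unfolding ev_def by (rule poly_cnj_real) (simp add: of_rat_Reals)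

lemma reality: assumes qr: "ev q (zeta n) \<in> \<real>" and u: "u \<in> R" shows "ev q u \<in> \<real>"
proof -
  define Q where "Q = q - q \<circ>\<^sub>p Polynomial.monom 1 (n - 1)"
  have "ev Q (zeta n) = ev q (zeta n) - ev q (cnj (zeta n))"
    unfolding Q_def using cnj_R[OF zeta_R] by simp
  also have "\<dots> = 0" using qr by (simp add: cnj_ev[symmetric] Reals_cnj_iff)
  finally have "m dvd Q" using irr_min[OF irr mroot] by blast
  hence "ev Q u = 0" using ev_dvd u unfolding R_def by blast
  hence "ev q u = ev q (cnj u)" unfolding Q_def using cnj_R[OF u] by simp
  thus ?thesis by (simp add: cnj_ev[symmetric] Reals_cnj_iff)
qed

definition Kf :: "complex set" where "Kf = {z. \<exists>q. z = ev q (zeta n)}"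

lemma Kf_inverse: assumes "z \<in> Kf" "z \<noteq> 0" shows "inverse z \<in> Kf"
proof -
  obtain q where q: "z = ev q (zeta n)" using assms(1) unfolding Kf_def by auto
  have nd: "\<not> m dvd q" using ev_dvd[OF _ mroot] q assms(2) by blast
  have "gcd m q dvd m" by simp
  then obtain c where mc: "m = gcd m q * c" by (elim dvdE)
  have "\<not> is_unit c"
  proof
    assume "is_unit c"
    have "m dvd gcd m q * c" using mc by simp
    hence "m dvd gcd m q" using dvd_mult_unit_iff[OF \<open>is_unit c\<close>] by simp
    thus False using nd by (metis dvd_trans gcd_dvd2)
  qed
  hence "is_unit (gcd m q)" using irreducibleD[OF irr mc] by auto
  hence g1: "gcd m q = 1" using is_unit_gcd_iff by blast
  define b where "b = snd (bezout_coefficients m q)"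
  have "fst (bezout_coefficients m q) * m + b * q = 1" using bezout_coefficients_fst_snd[of m q] g1 b_def by simp
  hence "ev (fst (bezout_coefficients m q) * m + b * q) (zeta n) = 1" by simp
  hence "ev b (zeta n) * z = 1" using mroot q by simp
  hence "inverse z = ev b (zeta n)" using inverse_unique[of z "ev b (zeta n)"] by (simp add: mult.commute)
  thus ?thesis unfolding Kf_def by auto
qed

lemma Kf_subfield: "is_subfield Kf"
  unfolding is_subfield_def
proof (intro conjI ballI impI)
  show "0 \<in> Kf" unfolding Kf_def by (rule CollectI, rule exI[of _ 0]) simp
  show "1 \<in> Kf" unfolding Kf_def by (rule CollectI, rule exI[of _ 1]) simp
  fix x assume x: "x \<in> Kf"
  then obtain p where p: "x = ev p (zeta n)" unfolding Kf_def by auto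
  show "- x \<in> Kf" unfolding Kf_def by (rule CollectI, rule exI[of _ "-p"]) (simp add: p)
  show "x \<noteq> 0 \<Longrightarrow> inverse x \<in> Kf" using Kf_inverse x by blast
  fix y assume "y \<in> Kf"
  then obtain q where q: "y = ev q (zeta n)" unfolding Kf_def by auto
  show "x + y \<in> Kf" unfolding Kf_def by (rule CollectI, rule exI[of _ "p+q"]) (simp add: p q)
  show "x * y \<in> Kf" unfolding Kf_def by (rule CollectI, rule exI[of _ "p*q"]) (simp add: p q)
qed

lemma zeta_Kf: "zeta n \<in> Kf" unfolding Kf_def by (rule CollectI, rule exI[of _ "[:0,1:]"]) simp

lemma cyc_sub: "cyclotomic_field n \<subseteq> Kf"
  unfolding cyclotomic_field_def using Kf_subfield zeta_Kf unfolding zeta_def by auto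

end

lemma exists_cyc: assumes n: "n > 0" shows "\<exists>m. cyc n m"
proof -
  have P0: "(Polynomial.monom 1 n - 1 :: rat poly) \<noteq> 0"
  proof
    assume "(Polynomial.monom 1 n - 1 :: rat poly) = 0"
    hence "coeff (Polynomial.monom 1 n - 1 :: rat poly) n = 0" by simp
    thus False using n by (simp add: coeff_monom)
  qed
  have "ev (Polynomial.monom 1 n - 1) (zeta n) = 0" using zeta_pow_n[OF n] by simp
  from exists_irr_factor[OF P0 this] obtain m where "irreducible m" "ev m (zeta n) = 0" by blast
  thus ?thesis using n cyc.intro by blast
qed

theorem no_abelian_root:
  fixes f :: "rat poly"
  assumes firr: "irreducible f" and re: "ev f (complex_of_real x) = 0"
    and nre: "ev f (z0::complex) = 0" "z0 \<notin> \<real>"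
    and fz: "ev f (z::complex) = 0"
  shows "z \<notin> Qab"
proof
  assume "z \<in> Qab"
  then obtain n where n: "n > 0" "z \<in> cyclotomic_field n" unfolding Qab_def by auto
  obtain m where "cyc n m" using exists_cyc[OF n(1)] by blast
  then interpret cyc n m .
  obtain q where q: "z = ev q (zeta n)" using cyc_sub n(2) unfolding Kf_def by auto
  have a: "ev f (ev q (zeta n)) = 0" using fz q by simp
  obtain u0 where u0: "u0 \<in> R" "complex_of_real x = ev q u0" using transitivity[OF firr a re] by blast
  define q' where "q' = q \<circ>\<^sub>p Polynomial.monom 1 (ex u0)"
  have q'z: "ev q' (zeta n) = complex_of_real x" unfolding q'_def using u0 ex(2)[OF u0(1)] by simp
  have a': "ev f (ev q' (zeta n)) = 0" using q'z re by simp
  obtain u where u: "u \<in> R" "z0 = ev q' u" using transitivity[OF firr a' nre(1)] by blast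
  have "ev q' u \<in> \<real>" using reality[OF _ u(1)] q'z by simp
  thus False using u nre(2) by simp
qed


definition fpoly :: "nat \<Rightarrow> nat \<Rightarrow> (nat \<Rightarrow> rat) \<Rightarrow> rat \<Rightarrow> rat poly" where
  "fpoly d k a t = (\<Sum>i\<le>d. Polynomial.monom (if i = k then t else a i) i)"

lemma coeff_fpoly: "coeff (fpoly d k a t) j = (if j \<le> d then (if j = k then t else a j) else 0)"
  unfolding fpoly_def by (auto simp: coeff_sum coeff_monom)

lemma ev_fpoly: assumes "k \<le> d"
  shows "ev (fpoly d k a t) z = of_rat t * z ^ k + (\<Sum>i\<in>{..d}-{k}. of_rat (a i) * z ^ i)"
proof -
  have "ev (fpoly d k a t) z = (\<Sum>i\<le>d. of_rat (if i = k then t else a i) * z ^ i)"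
    unfolding fpoly_def ev_sum by simp
  also have "\<dots> = of_rat t * z ^ k + (\<Sum>i\<in>{..d}-{k}. of_rat (if i = k then t else a i) * z ^ i)"
    by (subst sum.remove[of _ k]) (use assms in auto)
  also have "(\<Sum>i\<in>{..d}-{k}. of_rat (if i = k then t else a i) * z ^ i) = (\<Sum>i\<in>{..d}-{k}. of_rat (a i) * z ^ i)"
    by (rule sum.cong) auto
  finally show ?thesis .
qed

lemma cmod_of_rat: "cmod (of_rat r) = \<bar>real_of_rat r\<bar>"
  by (simp only: of_real_of_rat[symmetric] norm_of_real)

lemma norm_sum_bound:
  fixes z :: complex
  assumes "\<And>i. i \<in> I \<Longrightarrow> cmod z ^ i \<le> B" "B \<ge> 0"
  shows "cmod (\<Sum>i\<in>I. of_rat (a i) * z ^ i) \<le> (\<Sum>i\<in>I. \<bar>real_of_rat (a i)\<bar>) * B"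
proof -
  have "cmod (\<Sum>i\<in>I. of_rat (a i) * z ^ i) \<le> (\<Sum>i\<in>I. cmod (of_rat (a i) * z ^ i))" by (rule norm_sum)
  also have "\<dots> = (\<Sum>i\<in>I. \<bar>real_of_rat (a i)\<bar> * cmod z ^ i)" by (simp add: norm_mult norm_power cmod_of_rat)
  also have "\<dots> \<le> (\<Sum>i\<in>I. \<bar>real_of_rat (a i)\<bar> * B)" by (rule sum_mono) (simp add: assms mult_left_mono)
  also have "\<dots> = (\<Sum>i\<in>I. \<bar>real_of_rat (a i)\<bar>) * B" by (simp add: sum_distrib_right)
  finally show ?thesis .
qed

lemma sum_abs_le_S: fixes d :: nat shows "I \<subseteq> {..d} \<Longrightarrow> (\<Sum>i\<in>I. \<bar>real_of_rat (a i)\<bar>) \<le> (\<Sum>i\<le>d. \<bar>real_of_rat (a i)\<bar>)"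
  by (rule sum_mono2) auto

lemma sum_abs_le_S1: fixes d :: nat
  assumes "I \<subseteq> {..d}" shows "(\<Sum>i\<in>I. \<bar>real_of_rat (a i)\<bar>) \<le> 1 + (\<Sum>i\<le>d. \<bar>real_of_rat (a i)\<bar>)"
  using sum_abs_le_S[OF assms, of a] by simp

lemma root_bounds:
  fixes a :: "nat \<Rightarrow> rat" and t :: rat and z :: complex
  assumes k: "0 < k" "k < d" and a0: "a 0 \<noteq> 0" and ad: "a d \<noteq> 0"
    and root: "ev (fpoly d k a t) z = 0"
    and S: "S = 1 + (\<Sum>i\<le>d. \<bar>real_of_rat (a i)\<bar>)"
    and u: "u = \<bar>real_of_rat t\<bar>"
    and t1: "u \<ge> S * (2 * S / \<bar>real_of_rat (a 0)\<bar>) ^ k"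
    and t2: "u \<ge> S * (2 * S / \<bar>real_of_rat (a d)\<bar>) ^ (d - k)"
  shows "(\<bar>real_of_rat (a 0)\<bar> / (2 * u) \<le> cmod z ^ k \<and> cmod z ^ k \<le> S / u) \<or>
         (u / S \<le> cmod z ^ (d - k) \<and> cmod z ^ (d - k) \<le> 2 * u / \<bar>real_of_rat (a d)\<bar>)"
proof -
  define A0 where "A0 = \<bar>real_of_rat (a 0)\<bar>"
  define Ad where "Ad = \<bar>real_of_rat (a d)\<bar>"
  define w where "w = cmod z"
  define I where "I = {..d} - {k}"
  define g where "g = (\<Sum>i\<in>I. of_rat (a i) * z ^ i)"
  have A0p: "A0 > 0" using a0 unfolding A0_def by simp
  have Adp: "Ad > 0" using ad unfolding Ad_def by simp
  have S1: "S \<ge> 1" unfolding S by (simp add: sum_nonneg)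
  have w0: "w \<ge> 0" unfolding w_def by simp
  have SI: "(\<Sum>i\<in>I. \<bar>real_of_rat (a i)\<bar>) \<le> S" unfolding S I_def
    by (rule sum_abs_le_S1) auto
  have eq: "of_rat t * z ^ k = - g" using root ev_fpoly[of k d a t z] k unfolding g_def I_def by (simp add: add_eq_0_iff)
  hence "cmod (of_rat t * z ^ k) = cmod g" by simp
  hence ug: "u * w ^ k = cmod g" unfolding u w_def by (simp add: norm_mult norm_power cmod_of_rat)
  have A0S: "A0 \<le> S" unfolding A0_def S using member_le_sum[of 0 "{..d}" "\<lambda>i. \<bar>real_of_rat (a i)\<bar>"] by (simp add: sum_nonneg)
  have AdS: "Ad \<le> S" unfolding Ad_def S using member_le_sum[of d "{..d}" "\<lambda>i. \<bar>real_of_rat (a i)\<bar>"] by (simp add: sum_nonneg)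
  have up: "u > 0"
  proof -
    have "(2 * S / A0) ^ k > 0" using A0p S1 by simp
    hence "S * (2 * S / A0) ^ k > 0" using S1 by simp
    thus ?thesis using t1 unfolding A0_def by linarith
  qed
  show ?thesis
  proof (cases "w \<le> 1")
    case True
    have "cmod g \<le> (\<Sum>i\<in>I. \<bar>real_of_rat (a i)\<bar>) * 1" unfolding g_def
      by (rule norm_sum_bound) (use True w0 in \<open>auto simp: w_def intro: power_le_one\<close>)
    hence "u * w ^ k \<le> S" using ug SI by simp
    hence wk: "w ^ k \<le> S / u" using up by (simp add: field_simps)
    have "S / u \<le> (A0 / (2 * S)) ^ k"
    proof -
      have "S / u \<le> S / (S * (2 * S / A0) ^ k)"
        using t1 up S1 A0p unfolding A0_def by (intro divide_left_mono) auto
      also have "\<dots> = (A0 / (2 * S)) ^ k" using S1 A0p by (simp add: power_divide field_simps)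
      finally show ?thesis .
    qed
    hence "w ^ k \<le> (A0 / (2 * S)) ^ k" using wk by simp
    moreover obtain k' where k': "k = Suc k'" using k(1) by (cases k) auto
    ultimately have "w ^ Suc k' \<le> (A0 / (2 * S)) ^ Suc k'" by simp
    hence wsmall: "w \<le> A0 / (2 * S)"
      by (rule power_le_imp_le_base) (use A0p S1 in simp)
    have g0: "g = of_rat (a 0) + (\<Sum>i\<in>I - {0}. of_rat (a i) * z ^ i)"
      unfolding g_def by (subst sum.remove[of _ 0]) (use k in \<open>auto simp: I_def\<close>)
    have "cmod (\<Sum>i\<in>I - {0}. of_rat (a i) * z ^ i) \<le> (\<Sum>i\<in>I - {0}. \<bar>real_of_rat (a i)\<bar>) * w"
    proof (rule norm_sum_bound)
      fix i assume "i \<in> I - {0}"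
      hence "i \<ge> 1" by auto
      thus "cmod z ^ i \<le> w" using power_decreasing[of 1 i w] True w0 unfolding w_def by simp
    qed (use w0 in simp)
    also have "\<dots> \<le> S * w"
    proof (rule mult_right_mono[OF _ w0])
      show "(\<Sum>i\<in>I - {0}. \<bar>real_of_rat (a i)\<bar>) \<le> S" unfolding S I_def
        by (rule sum_abs_le_S1) auto
    qed
    also have "\<dots> \<le> A0 / 2" using wsmall S1 by (simp add: field_simps)
    finally have rest: "cmod (\<Sum>i\<in>I - {0}. of_rat (a i) * z ^ i) \<le> A0 / 2" .
    have "A0 = cmod (of_rat (a 0) :: complex)" unfolding A0_def by (simp add: cmod_of_rat)
    also have "(of_rat (a 0) :: complex) = g - (\<Sum>i\<in>I - {0}. of_rat (a i) * z ^ i)" using g0 by simp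
    also have "cmod \<dots> \<le> cmod g + cmod (\<Sum>i\<in>I - {0}. of_rat (a i) * z ^ i)"
      by (rule norm_triangle_ineq4)
    finally have "cmod g \<ge> A0 / 2" using rest by simp
    hence "u * w ^ k \<ge> A0 / 2" using ug by simp
    hence "w ^ k \<ge> A0 / (2 * u)" using up by (simp add: field_simps)
    thus ?thesis using wk unfolding w_def A0_def by simp
  next
    case False
    hence w1: "w > 1" by simp
    have "cmod g \<le> (\<Sum>i\<in>I. \<bar>real_of_rat (a i)\<bar>) * w ^ d" unfolding g_def
    proof (rule norm_sum_bound)
      fix i assume "i \<in> I" hence "i \<le> d" unfolding I_def by auto
      thus "cmod z ^ i \<le> w ^ d" unfolding w_def using w1 unfolding w_def by (simp add: power_increasing)
    qed (use w0 in simp)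
    also have "\<dots> \<le> S * w ^ d" using SI w0 by (simp add: mult_right_mono)
    finally have "u * w ^ k \<le> S * w ^ d" using ug by simp
    also have "w ^ d = w ^ k * w ^ (d - k)" using k by (simp add: power_add[symmetric])
    finally have "u * w ^ k \<le> S * (w ^ k * w ^ (d - k))" .
    hence "u \<le> S * w ^ (d - k)" using w1 by (simp add: mult.left_commute)
    hence lo: "u / S \<le> w ^ (d - k)" using S1 by (simp add: field_simps)
    have "(2 * S / Ad) ^ (d - k) \<le> u / S" using t2 S1 unfolding Ad_def by (simp add: field_simps)
    hence "(2 * S / Ad) ^ (d - k) \<le> w ^ (d - k)" using lo by simp
    moreover obtain m where m: "d - k = Suc m" using k by (cases "d - k") auto
    ultimately have "(2 * S / Ad) ^ Suc m \<le> w ^ Suc m" by simp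
    hence wbig: "2 * S / Ad \<le> w" by (rule power_le_imp_le_base) (use w0 in simp)
    define I' where "I' = {..d} - {k} - {d}"
    have "of_rat (a d) * z ^ d = - (of_rat t * z ^ k + (\<Sum>i\<in>I'. of_rat (a i) * z ^ i))"
    proof -
      have "g = of_rat (a d) * z ^ d + (\<Sum>i\<in>I'. of_rat (a i) * z ^ i)"
        unfolding g_def I'_def I_def by (subst sum.remove[of _ d]) (use k in auto)
      thus ?thesis using eq by (simp add: algebra_simps)
    qed
    hence "cmod (of_rat (a d) * z ^ d) = cmod (of_rat t * z ^ k + (\<Sum>i\<in>I'. of_rat (a i) * z ^ i))"
      by (simp only: norm_minus_cancel)
    hence "Ad * w ^ d = cmod (of_rat t * z ^ k + (\<Sum>i\<in>I'. of_rat (a i) * z ^ i))"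
      unfolding Ad_def w_def by (simp add: norm_mult norm_power cmod_of_rat)
    also have "\<dots> \<le> cmod (of_rat t * z ^ k) + cmod (\<Sum>i\<in>I'. of_rat (a i) * z ^ i)" by (rule norm_triangle_ineq)
    also have "cmod (of_rat t * z ^ k) = u * w ^ k" unfolding u w_def by (simp add: norm_mult norm_power cmod_of_rat)
    also have "cmod (\<Sum>i\<in>I'. of_rat (a i) * z ^ i) \<le> (\<Sum>i\<in>I'. \<bar>real_of_rat (a i)\<bar>) * w ^ (d - 1)"
    proof (rule norm_sum_bound)
      fix i assume "i \<in> I'" hence "i \<le> d - 1" unfolding I'_def by auto
      thus "cmod z ^ i \<le> w ^ (d - 1)" unfolding w_def using w1 unfolding w_def by (simp add: power_increasing)
    qed (use w0 in simp)
    also have "\<dots> \<le> S * w ^ (d - 1)"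
    proof (rule mult_right_mono)
      show "(\<Sum>i\<in>I'. \<bar>real_of_rat (a i)\<bar>) \<le> S" unfolding S I'_def
        by (rule sum_abs_le_S1) auto
    qed (use w0 in simp)
    finally have ineq: "Ad * w ^ d \<le> u * w ^ k + S * w ^ (d - 1)" by simp
    have wd: "w ^ d = w * w ^ (d - 1)" using power_Suc[of w "d - 1"] k by simp
    have "2 * S * w ^ (d - 1) \<le> Ad * w * w ^ (d - 1)"
    proof (rule mult_right_mono)
      show "2 * S \<le> Ad * w" using wbig Adp by (simp add: field_simps)
    qed (use w0 in simp)
    hence "S * w ^ (d - 1) \<le> Ad * w ^ d / 2" using wd by (simp add: field_simps)
    hence "Ad * w ^ d / 2 \<le> u * w ^ k" using ineq by simp
    hence "Ad * (w ^ k * w ^ (d - k)) / 2 \<le> u * w ^ k" using k by (simp add: power_add[symmetric])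
    hence "Ad * w ^ (d - k) / 2 \<le> u" using w1 by (simp add: field_simps)
    hence "w ^ (d - k) \<le> 2 * u / Ad" using Adp by (simp add: field_simps)
    thus ?thesis using lo unfolding w_def Ad_def by simp
  qed
qed

lemma prod_cmod_nonneg: "0 \<le> (\<Prod>z\<leftarrow>(ys::complex list). cmod z)"
  by (induction ys) auto

lemma arch:
  fixes a :: "nat \<Rightarrow> rat"
  assumes k: "0 < k" "k < d" and a0: "a 0 \<noteq> 0" and ad: "a d \<noteq> 0" and L: "0 < L" "L \<le> 1"
  shows "\<exists>T. \<forall>t zs. \<bar>real_of_rat t\<bar> \<ge> T \<longrightarrow> (\<forall>z\<in>set zs. ev (fpoly d k a t) z = 0) \<longrightarrow> length zs \<le> d \<longrightarrow>
           \<not> d dvd (length zs * (d - k)) \<longrightarrow> \<not> (L \<le> (\<Prod>z\<leftarrow>zs. cmod z) \<and> (\<Prod>z\<leftarrow>zs. cmod z) \<le> 1 / L)"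
proof -
  define S where "S = 1 + (\<Sum>i\<le>d. \<bar>real_of_rat (a i)\<bar>)"
  define A0 where "A0 = \<bar>real_of_rat (a 0)\<bar>"
  define Ad where "Ad = \<bar>real_of_rat (a d)\<bar>"
  define T1 where "T1 = max (S * (2 * S / A0) ^ k) (S * (2 * S / Ad) ^ (d - k))"
  define c1 where "c1 = min (min ((A0 / 2) ^ (d - k)) (1 / S ^ k)) 1"
  define C1 where "C1 = max (max (S ^ (d - k)) ((2 / Ad) ^ k)) 1"
  define T where "T = max (max T1 1) (max ((1 / L) ^ (d * d) / c1 ^ d) (C1 ^ d / L ^ (d * d))) + 1"
  have A0p: "A0 > 0" using a0 unfolding A0_def by simp
  have Adp: "Ad > 0" using ad unfolding Ad_def by simp
  have S1: "S \<ge> 1" unfolding S_def by (simp add: sum_nonneg)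
  have c1p: "c1 > 0" unfolding c1_def using A0p S1 by simp
  have c11: "c1 \<le> 1" unfolding c1_def by simp
  have C11: "C1 \<ge> 1" unfolding C1_def by simp
  show ?thesis
  proof (rule exI[of _ T], intro allI impI notI)
    fix t :: rat and zs :: "complex list"
    assume tT: "\<bar>real_of_rat t\<bar> \<ge> T" and roots: "\<forall>z\<in>set zs. ev (fpoly d k a t) z = 0"
      and len: "length zs \<le> d" and ndvd: "\<not> d dvd (length zs * (d - k))"
      and bnd: "L \<le> (\<Prod>z\<leftarrow>zs. cmod z) \<and> (\<Prod>z\<leftarrow>zs. cmod z) \<le> 1 / L"
    define u where "u = \<bar>real_of_rat t\<bar>"
    have uT: "u \<ge> T" using tT unfolding u_def .
    have u1: "u \<ge> 1" using uT unfolding T_def by simp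
    have up: "u > 0" using u1 by simp
    have uT1: "u \<ge> T1" using uT unfolding T_def by simp
    have uB1: "u > (1 / L) ^ (d * d) / c1 ^ d" using uT unfolding T_def by simp
    have uB2: "u > C1 ^ d / L ^ (d * d)" using uT unfolding T_def by simp
    define m where "m = k * (d - k)"
    have cls: "(c1 \<le> cmod z ^ m * u ^ (d - k) \<and> cmod z ^ m * u ^ (d - k) \<le> C1) \<or>
               (c1 * u ^ k \<le> cmod z ^ m \<and> cmod z ^ m \<le> C1 * u ^ k)" if zr: "z \<in> set zs" for z
    proof -
      have r: "ev (fpoly d k a t) z = 0" using roots zr by blast
      have w0: "cmod z \<ge> 0" by simp
      have m1: "cmod z ^ m = (cmod z ^ k) ^ (d - k)" unfolding m_def by (simp add: power_mult)
      have m2: "cmod z ^ m = (cmod z ^ (d - k)) ^ k" unfolding m_def by (simp add: power_mult[symmetric] mult.commute)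
      from root_bounds[OF k a0 ad r S_def u_def] uT1
      have rb: "(A0 / (2 * u) \<le> cmod z ^ k \<and> cmod z ^ k \<le> S / u) \<or>
         (u / S \<le> cmod z ^ (d - k) \<and> cmod z ^ (d - k) \<le> 2 * u / Ad)"
        unfolding T1_def A0_def Ad_def by simp
      thus ?thesis
      proof
        assume h: "A0 / (2 * u) \<le> cmod z ^ k \<and> cmod z ^ k \<le> S / u"
        have lo: "(A0 / (2 * u)) ^ (d - k) \<le> cmod z ^ m" unfolding m1
          by (rule power_mono) (use h A0p up in auto)
        have hi: "cmod z ^ m \<le> (S / u) ^ (d - k)" unfolding m1
          by (rule power_mono) (use h in auto)
        have "c1 \<le> (A0 / 2) ^ (d - k)" unfolding c1_def by simp
        also have "(A0 / 2) ^ (d - k) = (A0 / (2 * u)) ^ (d - k) * u ^ (d - k)"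
          using up by (simp add: power_divide field_simps)
        also have "\<dots> \<le> cmod z ^ m * u ^ (d - k)" by (rule mult_right_mono[OF lo]) (use up in simp)
        finally have 1: "c1 \<le> cmod z ^ m * u ^ (d - k)" .
        have "cmod z ^ m * u ^ (d - k) \<le> (S / u) ^ (d - k) * u ^ (d - k)" by (rule mult_right_mono[OF hi]) (use up in simp)
        also have "\<dots> = S ^ (d - k)" using up by (simp add: power_divide field_simps)
        also have "\<dots> \<le> C1" unfolding C1_def by simp
        finally have 2: "cmod z ^ m * u ^ (d - k) \<le> C1" .
        show ?thesis using 1 2 by simp
      next
        assume h: "u / S \<le> cmod z ^ (d - k) \<and> cmod z ^ (d - k) \<le> 2 * u / Ad"
        have lo: "(u / S) ^ k \<le> cmod z ^ m" unfolding m2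
          by (rule power_mono) (use h S1 up in auto)
        have hi: "cmod z ^ m \<le> (2 * u / Ad) ^ k" unfolding m2
          by (rule power_mono) (use h in auto)
        have "c1 * u ^ k \<le> (1 / S ^ k) * u ^ k" unfolding c1_def by (rule mult_right_mono) (use up in auto)
        also have "\<dots> = (u / S) ^ k" by (simp add: power_divide)
        finally have 1: "c1 * u ^ k \<le> cmod z ^ m" using lo by simp
        have "(2 * u / Ad) ^ k = (2 / Ad) ^ k * u ^ k" by (simp add: power_divide power_mult_distrib)
        also have "\<dots> \<le> C1 * u ^ k" unfolding C1_def by (rule mult_right_mono) (use up in auto)
        finally have 2: "cmod z ^ m \<le> C1 * u ^ k" using hi by simp
        show ?thesis using 1 2 by simp
      qed
    qed
    have ind: "(\<forall>z\<in>set ys. (c1 \<le> cmod z ^ m * u ^ (d - k) \<and> cmod z ^ m * u ^ (d - k) \<le> C1) \<or>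
               (c1 * u ^ k \<le> cmod z ^ m \<and> cmod z ^ m \<le> C1 * u ^ k)) \<Longrightarrow>
      (\<exists>s l. s + l = length ys \<and> c1 ^ length ys * u ^ (k * l) \<le> (\<Prod>z\<leftarrow>ys. cmod z) ^ m * u ^ ((d - k) * s)
         \<and> (\<Prod>z\<leftarrow>ys. cmod z) ^ m * u ^ ((d - k) * s) \<le> C1 ^ length ys * u ^ (k * l))" for ys
    proof (induction ys)
      case Nil
      show ?case by (rule exI[of _ 0], rule exI[of _ 0]) simp
    next
      case (Cons z ys)
      from Cons.IH Cons.prems obtain s l where sl: "s + l = length ys"
        and lo: "c1 ^ length ys * u ^ (k * l) \<le> (\<Prod>z\<leftarrow>ys. cmod z) ^ m * u ^ ((d - k) * s)"
        and hi: "(\<Prod>z\<leftarrow>ys. cmod z) ^ m * u ^ ((d - k) * s) \<le> C1 ^ length ys * u ^ (k * l)" by auto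
      define Y where "Y = (\<Prod>z\<leftarrow>ys. cmod z) ^ m * u ^ ((d - k) * s)"
      define y where "y = cmod z ^ m"
      have Y0: "Y \<ge> 0" unfolding Y_def using up by (simp add: prod_cmod_nonneg)
      have y0: "y \<ge> 0" unfolding y_def by simp
      have prodeq: "(\<Prod>z\<leftarrow>z # ys. cmod z) ^ m = y * (\<Prod>z\<leftarrow>ys. cmod z) ^ m"
        unfolding y_def by (simp add: power_mult_distrib)
      from Cons.prems have "(c1 \<le> y * u ^ (d - k) \<and> y * u ^ (d - k) \<le> C1) \<or> (c1 * u ^ k \<le> y \<and> y \<le> C1 * u ^ k)"
        unfolding y_def by simp
      thus ?case
      proof
        assume h: "c1 \<le> y * u ^ (d - k) \<and> y * u ^ (d - k) \<le> C1"
        have eqY: "(\<Prod>z\<leftarrow>z # ys. cmod z) ^ m * u ^ ((d - k) * Suc s) = (y * u ^ (d - k)) * Y"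
        proof -
          have uu: "u ^ ((d - k) * Suc s) = u ^ (d - k) * u ^ ((d - k) * s)" by (simp only: mult_Suc_right power_add)
          show ?thesis unfolding prodeq Y_def uu by (simp only: mult_ac)
        qed
        have "c1 ^ length (z # ys) * u ^ (k * l) = c1 * (c1 ^ length ys * u ^ (k * l))" by simp
        also have "\<dots> \<le> (y * u ^ (d - k)) * Y" unfolding Y_def
          by (rule mult_mono) (use h lo c1p up y0 in \<open>auto simp: prod_cmod_nonneg\<close>)
        finally have 1: "c1 ^ length (z # ys) * u ^ (k * l) \<le> (\<Prod>z\<leftarrow>z # ys. cmod z) ^ m * u ^ ((d - k) * Suc s)"
          using eqY by simp
        have "(y * u ^ (d - k)) * Y \<le> C1 * (C1 ^ length ys * u ^ (k * l))" unfolding Y_def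
          by (rule mult_mono) (use h hi C11 Y0 in \<open>auto simp: Y_def\<close>)
        hence 2: "(\<Prod>z\<leftarrow>z # ys. cmod z) ^ m * u ^ ((d - k) * Suc s) \<le> C1 ^ length (z # ys) * u ^ (k * l)"
          using eqY by simp
        show ?thesis using 1 2 sl by (intro exI[of _ "Suc s"] exI[of _ l]) simp
      next
        assume h: "c1 * u ^ k \<le> y \<and> y \<le> C1 * u ^ k"
        have eqY: "(\<Prod>z\<leftarrow>z # ys. cmod z) ^ m * u ^ ((d - k) * s) = y * Y"
          unfolding prodeq Y_def by (simp only: mult_ac)
        have "c1 ^ length (z # ys) * u ^ (k * Suc l) = (c1 * u ^ k) * (c1 ^ length ys * u ^ (k * l))"
          by (simp only: mult_Suc_right power_add length_Cons power_Suc mult_ac)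
        also have "\<dots> \<le> y * Y" unfolding Y_def
          by (rule mult_mono) (use h lo c1p up y0 in \<open>auto simp: prod_cmod_nonneg\<close>)
        finally have 1: "c1 ^ length (z # ys) * u ^ (k * Suc l) \<le> (\<Prod>z\<leftarrow>z # ys. cmod z) ^ m * u ^ ((d - k) * s)"
          using eqY by simp
        have "y * Y \<le> (C1 * u ^ k) * (C1 ^ length ys * u ^ (k * l))" unfolding Y_def
          by (rule mult_mono) (use h hi C11 Y0 up in \<open>auto simp: Y_def\<close>)
        also have "\<dots> = C1 ^ length (z # ys) * u ^ (k * Suc l)"
          by (simp only: mult_Suc_right power_add length_Cons power_Suc mult_ac)
        finally have 2: "(\<Prod>z\<leftarrow>z # ys. cmod z) ^ m * u ^ ((d - k) * s) \<le> C1 ^ length (z # ys) * u ^ (k * Suc l)"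
          using eqY by simp
        show ?thesis using 1 2 sl by (intro exI[of _ s] exI[of _ "Suc l"]) simp
      qed
    qed
    from ind[of zs] cls obtain s l where sl: "s + l = length zs"
      and lo: "c1 ^ length zs * u ^ (k * l) \<le> (\<Prod>z\<leftarrow>zs. cmod z) ^ m * u ^ ((d - k) * s)"
      and hi: "(\<Prod>z\<leftarrow>zs. cmod z) ^ m * u ^ ((d - k) * s) \<le> C1 ^ length zs * u ^ (k * l)" by blast
    define Q where "Q = (\<Prod>z\<leftarrow>zs. cmod z)"
    define P where "P = Q ^ m"
    define e1 where "e1 = k * l"
    define e2 where "e2 = (d - k) * s"
    have lo': "c1 ^ length zs * u ^ e1 \<le> P * u ^ e2" using lo unfolding P_def Q_def e1_def e2_def .
    have hi': "P * u ^ e2 \<le> C1 ^ length zs * u ^ e1" using hi unfolding P_def Q_def e1_def e2_def .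
    have ne: "e1 \<noteq> e2"
    proof
      assume "e1 = e2"
      hence "k * l = (d - k) * s" unfolding e1_def e2_def .
      hence "k * l + (d - k) * l = (d - k) * s + (d - k) * l" by simp
      hence "d * l = (d - k) * length zs" using sl k by (simp add: add_mult_distrib2[symmetric] add_mult_distrib[symmetric])
      hence "length zs * (d - k) = d * l" by (simp add: mult.commute)
      hence "d dvd length zs * (d - k)" by simp
      thus False using ndvd by simp
    qed
    have mle: "m \<le> d * d" unfolding m_def using k by (simp add: mult_le_mono)
    have PL: "L ^ (d * d) \<le> P"
    proof -
      have "L ^ (d * d) \<le> L ^ m" using mle L by (simp add: power_decreasing)
      also have "\<dots> \<le> P" unfolding P_def Q_def by (rule power_mono) (use bnd L in auto)
      finally show ?thesis .
    qed
    have PU: "P \<le> (1 / L) ^ (d * d)"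
    proof -
      have "P \<le> (1 / L) ^ m" unfolding P_def Q_def by (rule power_mono) (use bnd in \<open>auto simp: prod_cmod_nonneg\<close>)
      also have "\<dots> \<le> (1 / L) ^ (d * d)" using mle L by (intro power_increasing) auto
      finally show ?thesis .
    qed
    have c1d: "c1 ^ d \<le> c1 ^ length zs" using len c1p c11 by (simp add: power_decreasing)
    have C1d: "C1 ^ length zs \<le> C1 ^ d" using len C11 by (simp add: power_increasing)
    show False
    proof (cases "e1 > e2")
      case True
      have "u ^ e1 = u ^ e2 * u ^ (e1 - e2)" using True by (simp add: power_add[symmetric])
      also have "u ^ (e1 - e2) \<ge> u" using power_increasing[of 1 "e1 - e2" u] True u1 by simp
      hence "u ^ e2 * u ^ (e1 - e2) \<ge> u ^ e2 * u" using up by simp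
      finally have "u ^ e1 \<ge> u ^ e2 * u" .
      hence "c1 ^ d * (u ^ e2 * u) \<le> c1 ^ length zs * u ^ e1"
        using c1d c1p up by (intro mult_mono) auto
      also have "\<dots> \<le> P * u ^ e2" by (rule lo')
      finally have "(c1 ^ d * u) * u ^ e2 \<le> P * u ^ e2" by (simp add: algebra_simps)
      hence "c1 ^ d * u \<le> P" using up by simp
      hence "c1 ^ d * u \<le> (1 / L) ^ (d * d)" using PU by simp
      moreover have "c1 ^ d > 0" using c1p by simp
      ultimately have "u \<le> (1 / L) ^ (d * d) / c1 ^ d" using pos_le_divide_eq[of "c1 ^ d" u] by (simp add: mult.commute)
      thus False using uB1 by simp
    next
      case False
      hence lt: "e2 > e1" using ne by simp
      have "u ^ e2 = u ^ e1 * u ^ (e2 - e1)" using lt by (simp add: power_add[symmetric])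
      also have "u ^ (e2 - e1) \<ge> u" using power_increasing[of 1 "e2 - e1" u] lt u1 by simp
      hence "u ^ e1 * u ^ (e2 - e1) \<ge> u ^ e1 * u" using up by simp
      finally have "u ^ e2 \<ge> u ^ e1 * u" .
      moreover have "P \<ge> 0" unfolding P_def Q_def by (simp add: prod_cmod_nonneg)
      ultimately have "L ^ (d * d) * (u ^ e1 * u) \<le> P * u ^ e2"
        using PL L up by (intro mult_mono) auto
      also have "\<dots> \<le> C1 ^ length zs * u ^ e1" by (rule hi')
      also have "\<dots> \<le> C1 ^ d * u ^ e1" using C1d up by simp
      finally have "(L ^ (d * d) * u) * u ^ e1 \<le> C1 ^ d * u ^ e1" by (simp add: algebra_simps)
      hence "L ^ (d * d) * u \<le> C1 ^ d" using up by simp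
      moreover have "L ^ (d * d) > 0" using L by simp
      ultimately have "u \<le> C1 ^ d / L ^ (d * d)" using pos_le_divide_eq[of "L ^ (d * d)" u] by (simp add: mult.commute)
      thus False using uB2 by simp
    qed
  qed
qed


lemma coeff_mult_low:
  fixes G H :: "int poly" and p :: int
  assumes n: "n = i0 + j0"
    and hG: "\<And>i. i < i0 \<Longrightarrow> p dvd coeff G i" and hH: "\<And>j. j < j0 \<Longrightarrow> p dvd coeff H j"
  shows "p dvd (coeff (G*H) n - coeff G i0 * coeff H j0)"
proof -
  have "coeff (G*H) n = (\<Sum>i\<le>n. coeff G i * coeff H (n - i))" by (rule coeff_mult)
  also have "\<dots> = coeff G i0 * coeff H (n - i0) + (\<Sum>i\<in>{..n}-{i0}. coeff G i * coeff H (n-i))"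
    by (rule sum.remove) (auto simp: n)
  finally have eq: "coeff (G*H) n = coeff G i0 * coeff H j0 + (\<Sum>i\<in>{..n}-{i0}. coeff G i * coeff H (n-i))"
    using n by simp
  have "p dvd (\<Sum>i\<in>{..n}-{i0}. coeff G i * coeff H (n-i))"
  proof (rule dvd_sum)
    fix i assume i: "i \<in> {..n} - {i0}"
    show "p dvd coeff G i * coeff H (n - i)"
    proof (cases "i < i0")
      case True thus ?thesis using hG by (simp add: dvd_mult2)
    next
      case False
      hence "n - i < j0" using i n by auto
      thus ?thesis using hH by (simp add: dvd_mult)
    qed
  qed
  thus ?thesis using eq by simp
qed

lemma coeff_mult_high:
  fixes G H :: "int poly" and p :: int
  assumes n: "n = i1 + j1"
    and hG: "\<And>i. i > i1 \<Longrightarrow> p dvd coeff G i" and hH: "\<And>j. j > j1 \<Longrightarrow> p dvd coeff H j"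
  shows "p dvd (coeff (G*H) n - coeff G i1 * coeff H j1)"
proof -
  have "coeff (G*H) n = (\<Sum>i\<le>n. coeff G i * coeff H (n - i))" by (rule coeff_mult)
  also have "\<dots> = coeff G i1 * coeff H (n - i1) + (\<Sum>i\<in>{..n}-{i1}. coeff G i * coeff H (n-i))"
    by (rule sum.remove) (auto simp: n)
  finally have eq: "coeff (G*H) n = coeff G i1 * coeff H j1 + (\<Sum>i\<in>{..n}-{i1}. coeff G i * coeff H (n-i))"
    using n by simp
  have "p dvd (\<Sum>i\<in>{..n}-{i1}. coeff G i * coeff H (n-i))"
  proof (rule dvd_sum)
    fix i assume i: "i \<in> {..n} - {i1}"
    show "p dvd coeff G i * coeff H (n - i)"
    proof (cases "i > i1")
      case True thus ?thesis using hG by (simp add: dvd_mult2)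
    next
      case False
      hence "n - i > j1" using i n by auto
      thus ?thesis using hH by (simp add: dvd_mult)
    qed
  qed
  thus ?thesis using eq by simp
qed

lemma modp:
  fixes F G H :: "int poly" and p :: int
  assumes p: "prime p" and FGH: "F = G * H" and dF: "degree F = d"
    and oth: "\<And>i. i \<noteq> k \<Longrightarrow> p dvd coeff F i" and ndk: "\<not> p dvd coeff F k"
    and n0: "k \<noteq> 0 \<Longrightarrow> \<not> p^2 dvd coeff F 0" and nd: "k \<noteq> d \<Longrightarrow> \<not> p^2 dvd coeff F d"
    and dG: "degree G > 0" and dH: "degree H > 0"
  shows "0 < k \<and> k < d \<and> (degree G = k \<or> degree G = d - k)"
proof -
  have G0: "G \<noteq> 0" and H0: "H \<noteq> 0" using dG dH by auto
  have dsum: "degree G + degree H = d" using dF FGH degree_mult_eq[OF G0 H0] by simp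
  define IG where "IG = {i. \<not> p dvd coeff G i}"
  define IH where "IH = {j. \<not> p dvd coeff H j}"
  have finIG: "finite IG"
  proof (rule finite_subset[of _ "{..degree G}"])
    show "IG \<subseteq> {..degree G}"
    proof
      fix x assume x: "x \<in> IG"
      show "x \<in> {..degree G}"
      proof (rule ccontr)
        assume "x \<notin> {..degree G}"
        hence "coeff G x = 0" by (simp add: coeff_eq_0)
        thus False using x unfolding IG_def by simp
      qed
    qed
  qed simp
  have finIH: "finite IH"
  proof (rule finite_subset[of _ "{..degree H}"])
    show "IH \<subseteq> {..degree H}"
    proof
      fix x assume x: "x \<in> IH"
      show "x \<in> {..degree H}"
      proof (rule ccontr)
        assume "x \<notin> {..degree H}"
        hence "coeff H x = 0" by (simp add: coeff_eq_0)
        thus False using x unfolding IH_def by simp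
      qed
    qed
  qed simp
  have neIG: "IG \<noteq> {}"
  proof
    assume "IG = {}"
    hence all: "p dvd coeff G i" for i unfolding IG_def by auto
    have "p dvd coeff F k" unfolding FGH coeff_mult by (rule dvd_sum) (simp add: all dvd_mult2)
    thus False using ndk by simp
  qed
  have neIH: "IH \<noteq> {}"
  proof
    assume "IH = {}"
    hence all: "p dvd coeff H i" for i unfolding IH_def by auto
    have "p dvd coeff F k" unfolding FGH coeff_mult by (rule dvd_sum) (simp add: all dvd_mult)
    thus False using ndk by simp
  qed
  define i0 where "i0 = Min IG"
  define i1 where "i1 = Max IG"
  define j0 where "j0 = Min IH"
  define j1 where "j1 = Max IH"
  have i0in: "i0 \<in> IG" unfolding i0_def using finIG neIG by simp
  have i1in: "i1 \<in> IG" unfolding i1_def using finIG neIG by simp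
  have j0in: "j0 \<in> IH" unfolding j0_def using finIH neIH by simp
  have j1in: "j1 \<in> IH" unfolding j1_def using finIH neIH by simp
  have Glow: "p dvd coeff G i" if "i < i0" for i
  proof (rule ccontr)
    assume "\<not> p dvd coeff G i" hence "i \<in> IG" unfolding IG_def by simp
    hence "i0 \<le> i" unfolding i0_def using finIG by simp
    thus False using that by simp
  qed
  have Ghigh: "p dvd coeff G i" if "i > i1" for i
  proof (rule ccontr)
    assume "\<not> p dvd coeff G i" hence "i \<in> IG" unfolding IG_def by simp
    hence "i \<le> i1" unfolding i1_def using finIG by simp
    thus False using that by simp
  qed
  have Hlow: "p dvd coeff H i" if "i < j0" for i
  proof (rule ccontr)
    assume "\<not> p dvd coeff H i" hence "i \<in> IH" unfolding IH_def by simp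
    hence "j0 \<le> i" unfolding j0_def using finIH by simp
    thus False using that by simp
  qed
  have Hhigh: "p dvd coeff H i" if "i > j1" for i
  proof (rule ccontr)
    assume "\<not> p dvd coeff H i" hence "i \<in> IH" unfolding IH_def by simp
    hence "i \<le> j1" unfolding j1_def using finIH by simp
    thus False using that by simp
  qed
  have i01: "i0 \<le> i1" unfolding i0_def using Min_le[OF finIG i1in] .
  have j01: "j0 \<le> j1" unfolding j0_def using Min_le[OF finIH j1in] .
  have pnd: "\<not> p dvd a * b" if "\<not> p dvd a" "\<not> p dvd b" for a b :: int
    using that p by (simp add: prime_dvd_mult_iff)
  have k0: "i0 + j0 = k"
  proof (rule ccontr)
    assume "i0 + j0 \<noteq> k"
    hence "p dvd coeff F (i0 + j0)" using oth by simp
    moreover have "p dvd (coeff F (i0 + j0) - coeff G i0 * coeff H j0)"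
      unfolding FGH by (rule coeff_mult_low[OF refl Glow Hlow])
    ultimately have "p dvd coeff F (i0 + j0) - (coeff F (i0 + j0) - coeff G i0 * coeff H j0)" by (rule dvd_diff)
    hence "p dvd coeff G i0 * coeff H j0" by simp
    thus False using pnd i0in j0in unfolding IG_def IH_def by auto
  qed
  have k1: "i1 + j1 = k"
  proof (rule ccontr)
    assume "i1 + j1 \<noteq> k"
    hence "p dvd coeff F (i1 + j1)" using oth by simp
    moreover have "p dvd (coeff F (i1 + j1) - coeff G i1 * coeff H j1)"
      unfolding FGH by (rule coeff_mult_high[OF refl Ghigh Hhigh])
    ultimately have "p dvd coeff F (i1 + j1) - (coeff F (i1 + j1) - coeff G i1 * coeff H j1)" by (rule dvd_diff)
    hence "p dvd coeff G i1 * coeff H j1" by simp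
    thus False using pnd i1in j1in unfolding IG_def IH_def by auto
  qed
  have ii: "i1 = i0" using k0 k1 i01 j01 by simp
  have jj: "j1 = j0" using k0 k1 i01 j01 by simp
  have Gchar: "\<not> p dvd coeff G i \<longleftrightarrow> i = i0" for i
  proof
    assume h: "\<not> p dvd coeff G i"
    show "i = i0"
    proof (rule ccontr)
      assume "i \<noteq> i0"
      hence "i < i0 \<or> i > i1" using ii by auto
      thus False using Glow Ghigh h by blast
    qed
  next
    assume "i = i0" thus "\<not> p dvd coeff G i" using i0in unfolding IG_def by simp
  qed
  have Hchar: "\<not> p dvd coeff H i \<longleftrightarrow> i = j0" for i
  proof
    assume h: "\<not> p dvd coeff H i"
    show "i = j0"
    proof (rule ccontr)
      assume "i \<noteq> j0"
      hence "i < j0 \<or> i > j1" using jj by auto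
      thus False using Hlow Hhigh h by blast
    qed
  next
    assume "i = j0" thus "\<not> p dvd coeff H i" using j0in unfolding IH_def by simp
  qed
  have i0d: "i0 \<le> degree G"
  proof -
    have "coeff G i0 \<noteq> 0" using i0in unfolding IG_def by auto
    thus ?thesis by (rule le_degree)
  qed
  have j0d: "j0 \<le> degree H"
  proof -
    have "coeff H j0 \<noteq> 0" using j0in unfolding IH_def by auto
    thus ?thesis by (rule le_degree)
  qed
  have "coeff F d = lead_coeff F" using dF by simp
  also have "\<dots> = lead_coeff G * lead_coeff H" unfolding FGH by (rule lead_coeff_mult)
  finally have Fd: "coeff F d = lead_coeff G * lead_coeff H" .
  have F0: "coeff F 0 = coeff G 0 * coeff H 0" using FGH by (simp add: coeff_mult_0)
  have sq: "p^2 dvd a * b" if "p dvd a" "p dvd b" for a b :: int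
    using that by (simp add: power2_eq_square mult_dvd_mono)
  have lcG: "\<not> p dvd lead_coeff G \<longleftrightarrow> degree G = i0" using Gchar by simp
  have lcH: "\<not> p dvd lead_coeff H \<longleftrightarrow> degree H = j0" using Hchar by simp
  have cG: "\<not> p dvd coeff G 0 \<longleftrightarrow> i0 = 0" using Gchar by auto
  have cH: "\<not> p dvd coeff H 0 \<longleftrightarrow> j0 = 0" using Hchar by auto
  show ?thesis
  proof (cases "k = d")
    case True
    hence "\<not> p dvd coeff F d" using ndk by simp
    hence "\<not> p dvd lead_coeff G" "\<not> p dvd lead_coeff H" unfolding Fd by (auto simp: dvd_mult dvd_mult2)
    hence dd: "degree G = i0" "degree H = j0" using lcG lcH by auto
    have "k \<noteq> 0" using True dsum dG dH by simp
    hence "\<not> p^2 dvd coeff F 0" using n0 by simp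
    hence "\<not> p dvd coeff G 0 \<or> \<not> p dvd coeff H 0" unfolding F0 using sq by blast
    hence "i0 = 0 \<or> j0 = 0" using cG cH by blast
    thus ?thesis using dd dG dH by auto
  next
    case kd: False
    have pFd: "p dvd coeff F d" using oth[of d] kd by auto
    have "\<not> p^2 dvd coeff F d" using nd kd by simp
    hence lc: "\<not> p dvd lead_coeff G \<or> \<not> p dvd lead_coeff H" unfolding Fd using sq by blast
    show ?thesis
    proof (cases "k = 0")
      case True
      hence "i0 = 0" "j0 = 0" using k0 by auto
      thus ?thesis using lc lcG lcH dG dH by auto
    next
      case k0': False
      have "\<not> p^2 dvd coeff F 0" using n0 k0' by simp
      hence c0: "\<not> p dvd coeff G 0 \<or> \<not> p dvd coeff H 0" unfolding F0 using sq by blast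
      have "k < d" using kd k0 dsum i0d j0d by simp
      from lc show ?thesis
      proof
        assume "\<not> p dvd lead_coeff G"
        hence dg: "degree G = i0" using lcG by simp
        hence "i0 \<noteq> 0" using dG by simp
        hence "j0 = 0" using c0 cG cH by blast
        thus ?thesis using dg k0 k0' \<open>k < d\<close> by simp
      next
        assume "\<not> p dvd lead_coeff H"
        hence dh: "degree H = j0" using lcH by simp
        hence "j0 \<noteq> 0" using dH by simp
        hence "i0 = 0" using c0 cG cH by blast
        hence "degree G = d - k" using dh k0 dsum by simp
        thus ?thesis using k0' \<open>k < d\<close> by simp
      qed
    qed
  qed
qed


lemma ev_altdef: "ev q x = (\<Sum>i\<le>degree q. of_rat (coeff q i) * x ^ i)"
  unfolding ev_def by (simp add: poly_altdef)

lemma ev_real: "of_real (ev q (x::real)) = (ev q (of_real x) :: complex)"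
  unfolding ev_altdef by (simp add: of_real_of_rat)

lemma ev_at0: "ev q 0 = of_rat (coeff q 0)"
  unfolding ev_def by (simp add: poly_0_coeff_0)

lemma degree_fpoly: assumes "(if d = k then t else a d) \<noteq> 0" shows "degree (fpoly d k a t) = d"
proof (rule antisym)
  show "degree (fpoly d k a t) \<le> d" by (rule degree_le) (simp add: coeff_fpoly)
  show "d \<le> degree (fpoly d k a t)" by (rule le_degree) (use assms in \<open>auto simp: coeff_fpoly\<close>)
qed

lemma real_root_pos:
  fixes a :: "nat \<Rightarrow> rat"
  assumes k: "0 < k" "k \<le> d" and a0: "a 0 \<noteq> 0"
    and sgn: "real_of_rat t * real_of_rat (a 0) < 0"
    and big: "\<bar>real_of_rat t\<bar> > (\<Sum>i\<le>d. \<bar>real_of_rat (a i)\<bar>)"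
  shows "\<exists>x::real. ev (fpoly d k a t) x = 0"
proof -
  let ?p = "map_poly (of_rat :: rat \<Rightarrow> real) (fpoly d k a t)"
  have f0: "poly ?p 0 = real_of_rat (a 0)" using ev_at0[of "fpoly d k a t"] k unfolding ev_def
    by (simp add: coeff_fpoly)
  define s where "s = (\<Sum>i\<in>{..d}-{k}. real_of_rat (a i) * 1 ^ i)"
  have f1: "poly ?p 1 = real_of_rat t + s" using ev_fpoly[OF k(2), of a t "1::real"] unfolding ev_def s_def by simp
  have "\<bar>s\<bar> \<le> (\<Sum>i\<in>{..d}-{k}. \<bar>real_of_rat (a i)\<bar>)" unfolding s_def
    by (rule order_trans[OF sum_abs]) simp
  also have "\<dots> \<le> (\<Sum>i\<le>d. \<bar>real_of_rat (a i)\<bar>)" by (rule sum_mono2) auto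
  finally have sl: "\<bar>s\<bar> < \<bar>real_of_rat t\<bar>" using big by simp
  have "poly ?p 0 * poly ?p 1 < 0"
  proof (cases "real_of_rat t > 0")
    case True
    hence "real_of_rat (a 0) < 0" using sgn by (simp add: mult_less_0_iff)
    moreover have "real_of_rat t + s > 0" using sl True by linarith
    ultimately show ?thesis unfolding f0 f1 by (simp add: mult_neg_pos)
  next
    case False
    hence tn: "real_of_rat t < 0" using sgn by (cases "real_of_rat t = 0") auto
    hence "real_of_rat (a 0) > 0" using sgn by (simp add: mult_less_0_iff)
    moreover have "real_of_rat t + s < 0" using sl tn by linarith
    ultimately show ?thesis unfolding f0 f1 by (simp add: mult_pos_neg)
  qed
  hence "\<exists>x>(0::real). x < 1 \<and> poly ?p x = 0" using poly_IVT[of 0 1 ?p] by simp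
  then obtain x where "poly ?p x = 0" by blast
  thus ?thesis unfolding ev_def by blast
qed

lemma real_root_zero:
  fixes a :: "nat \<Rightarrow> rat"
  assumes d: "0 < d" and ad: "a d \<noteq> 0"
    and sgn: "real_of_rat t * real_of_rat (a d) < 0"
  shows "\<exists>x::real. ev (fpoly d 0 a t) x = 0"
proof -
  let ?p = "map_poly (of_rat :: rat \<Rightarrow> real) (fpoly d 0 a t)"
  have f0: "poly ?p 0 = real_of_rat t" using ev_at0[of "fpoly d 0 a t"] unfolding ev_def
    by (simp add: coeff_fpoly)
  have dg: "degree (fpoly d 0 a t) = d" by (rule degree_fpoly) (use d ad in simp)
  have lc: "lead_coeff ?p = real_of_rat (a d)" using dg d by (simp add: coeff_fpoly)
  have "\<exists>x>0. poly ?p 0 * poly ?p x < 0"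
  proof (cases "real_of_rat (a d) > 0")
    case True
    then obtain n where n: "\<forall>x\<ge>n. lead_coeff ?p \<le> poly ?p x" using poly_pinfty_gt_lc[of ?p] lc by auto
    define x where "x = max n 1"
    have px: "poly ?p x \<ge> real_of_rat (a d)" using n lc unfolding x_def by auto
    have "poly ?p x > 0" using True px by linarith
    moreover have "real_of_rat t < 0" using sgn True by (simp add: mult_less_0_iff)
    ultimately show ?thesis unfolding f0 by (intro exI[of _ x]) (auto simp: x_def mult_neg_pos)
  next
    case False
    hence an: "real_of_rat (a d) < 0" using ad by (cases "real_of_rat (a d) = 0") auto
    have lc': "lead_coeff (- ?p) = - real_of_rat (a d)" using lc by simp
    then obtain n where n: "\<forall>x\<ge>n. lead_coeff (- ?p) \<le> poly (- ?p) x" using poly_pinfty_gt_lc[of "- ?p"] an by auto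
    define x where "x = max n 1"
    have px: "poly (- ?p) x \<ge> - real_of_rat (a d)" using n lc' unfolding x_def by auto
    have "poly (- ?p) x = - poly ?p x" by simp
    hence "poly ?p x < 0" using an px by linarith
    moreover have "real_of_rat t > 0" using sgn an by (simp add: mult_less_0_iff)
    ultimately show ?thesis unfolding f0 by (intro exI[of _ x]) (auto simp: x_def mult_pos_neg)
  qed
  then obtain x where "x > 0" "poly ?p 0 * poly ?p x < 0" by blast
  from poly_IVT[OF this] obtain y where "poly ?p y = 0" by blast
  thus ?thesis unfolding ev_def by blast
qed

lemma ext_max:
  fixes h h' :: "real \<Rightarrow> real"
  assumes x12: "x1 < x2" "x2 < x3"
    and deriv: "\<And>x. x1 \<le> x \<Longrightarrow> x \<le> x3 \<Longrightarrow> (h has_real_derivative h' x) (at x)"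
    and eq: "h x1 = t" "h x2 = t" "h x3 = t"
  shows "\<exists>c. x1 < c \<and> c < x3 \<and> h' c = 0 \<and> h c \<ge> t"
proof -
  have cont: "\<forall>x. x1 \<le> x \<and> x \<le> x3 \<longrightarrow> isCont h x" using deriv DERIV_isCont by blast
  from isCont_eq_Ub[OF _ cont] x12 obtain M where
    M: "\<forall>x. x1 \<le> x \<and> x \<le> x3 \<longrightarrow> h x \<le> M" and "\<exists>x\<ge>x1. x \<le> x3 \<and> h x = M" by auto
  then obtain c0 where c0: "x1 \<le> c0" "c0 \<le> x3" "h c0 = M" by blast
  define c where "c = (if x1 < c0 \<and> c0 < x3 then c0 else x2)"
  have cin: "x1 < c" "c < x3" unfolding c_def using x12 by auto
  have hc: "h c = M"
  proof (cases "x1 < c0 \<and> c0 < x3")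
    case True thus ?thesis unfolding c_def using c0 by simp
  next
    case False
    hence "c0 = x1 \<or> c0 = x3" using c0 by auto
    hence "M = t" using c0 eq by auto
    moreover have "h x2 \<le> M" using M x12 by simp
    ultimately have "h x2 = M" using eq by simp
    moreover have "c = x2" unfolding c_def by (rule if_not_P[OF False])
    ultimately show ?thesis by simp
  qed
  have Mt: "M \<ge> t" using M x12 eq by force
  have "h' c = 0"
  proof (rule DERIV_local_max[OF deriv[of c]])
    show "x1 \<le> c" "c \<le> x3" using cin by auto
    show "0 < min (c - x1) (x3 - c)" using cin by simp
    show "\<forall>y. \<bar>c - y\<bar> < min (c - x1) (x3 - c) \<longrightarrow> h y \<le> h c"
      using M hc by (auto simp: abs_less_iff)
  qed
  thus ?thesis using cin hc Mt by blast
qed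

lemma ext_crit:
  fixes h h' :: "real \<Rightarrow> real"
  assumes x12: "x1 < x2" "x2 < x3"
    and deriv: "\<And>x. x1 \<le> x \<Longrightarrow> x \<le> x3 \<Longrightarrow> (h has_real_derivative h' x) (at x)"
    and eq: "h x1 = t" "h x2 = t" "h x3 = t"
  shows "\<exists>c. x1 < c \<and> c < x3 \<and> h' c = 0 \<and> \<bar>h c\<bar> \<ge> \<bar>t\<bar>"
proof (cases "t \<ge> 0")
  case True
  from ext_max[OF x12 deriv eq] obtain c where "x1 < c" "c < x3" "h' c = 0" "h c \<ge> t" by blast
  thus ?thesis using True by (intro exI[of _ c]) auto
next
  case False
  have deriv': "((\<lambda>x. - h x) has_real_derivative - h' x) (at x)" if "x1 \<le> x" "x \<le> x3" for x
    using DERIV_minus[OF deriv[OF that]] .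
  from ext_max[of x1 x2 x3 "\<lambda>x. - h x" "\<lambda>x. - h' x" "- t"] x12 deriv' eq
  obtain c where "x1 < c" "c < x3" "- h' c = 0" "- h c \<ge> - t" by auto
  thus ?thesis using False by (intro exI[of _ c]) auto
qed

lemma three_elems:
  fixes Y :: "real set"
  assumes "finite Y" "card Y \<ge> 3"
  shows "\<exists>x1\<in>Y. \<exists>x2\<in>Y. \<exists>x3\<in>Y. x1 < x2 \<and> x2 < x3"
proof -
  have ne: "Y \<noteq> {}" using assms by auto
  define x1 where "x1 = Min Y"
  define x3 where "x3 = Max Y"
  have c2: "card {x1, x3} \<le> 2" by (cases "x1 = x3") auto
  have "card Y - card {x1, x3} \<le> card (Y - {x1, x3})" by (rule diff_card_le_card_Diff) simp
  hence "card (Y - {x1, x3}) \<ge> card Y - 2" using c2 by linarith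
  hence "card (Y - {x1, x3}) > 0" using assms by linarith
  then obtain x2 where x2: "x2 \<in> Y" "x2 \<noteq> x1" "x2 \<noteq> x3" by (metis card_gt_0_iff ex_in_conv DiffE insertCI)
  have "x1 \<le> x2" "x2 \<le> x3" unfolding x1_def x3_def using assms(1) x2(1) by auto
  hence "x1 < x2" "x2 < x3" using x2 by auto
  moreover have "x1 \<in> Y" "x3 \<in> Y" unfolding x1_def x3_def using assms(1) ne by auto
  ultimately show ?thesis using x2(1) by blast
qed


definition gpoly :: "nat \<Rightarrow> nat \<Rightarrow> (nat \<Rightarrow> rat) \<Rightarrow> rat poly" where "gpoly d k a = fpoly d k a 0"
definition hfun :: "nat \<Rightarrow> nat \<Rightarrow> (nat \<Rightarrow> rat) \<Rightarrow> real \<Rightarrow> real" where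
  "hfun d k a x = (- ev (gpoly d k a) x) / x ^ k"
definition Npoly :: "nat \<Rightarrow> nat \<Rightarrow> (nat \<Rightarrow> rat) \<Rightarrow> rat poly" where
  "Npoly d k a = smult (of_nat k) (gpoly d k a) - pCons 0 (pderiv (gpoly d k a))"
definition Bnd :: "nat \<Rightarrow> nat \<Rightarrow> (nat \<Rightarrow> rat) \<Rightarrow> real" where
  "Bnd d k a = (\<Sum>x\<in>{x::real. ev (Npoly d k a) x = 0}. \<bar>hfun d k a x\<bar>)"

lemma fpoly_split: assumes "k \<le> d" shows "fpoly d k a t = gpoly d k a + Polynomial.monom t k"
  unfolding gpoly_def by (rule poly_eqI) (use assms in \<open>auto simp: coeff_fpoly coeff_monom\<close>)

lemma ev_fpoly_split: "k \<le> d \<Longrightarrow> ev (fpoly d k a t) x = ev (gpoly d k a) x + of_rat t * x ^ k"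
  by (simp add: fpoly_split)

lemma coeff_Npoly: "coeff (Npoly d k a) j = (of_nat k - of_nat j) * coeff (gpoly d k a) j"
  unfolding Npoly_def by (cases j) (auto simp: coeff_pderiv algebra_simps)

lemma Npoly_nz: assumes kd: "k \<le> d" and d: "0 < d" and a0: "k \<noteq> 0 \<Longrightarrow> a 0 \<noteq> 0" and ad: "k \<noteq> d \<Longrightarrow> a d \<noteq> 0"
  shows "Npoly d k a \<noteq> 0"
proof (cases "k = d")
  case True
  hence "coeff (Npoly d k a) 0 = of_nat k * a 0" unfolding coeff_Npoly gpoly_def using d by (simp add: coeff_fpoly)
  moreover have "a 0 \<noteq> 0" using a0 True d by simp
  ultimately have "coeff (Npoly d k a) 0 \<noteq> 0" using True d by simp
  thus ?thesis by auto
next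
  case False
  hence "coeff (Npoly d k a) d = (of_nat k - of_nat d) * a d" unfolding coeff_Npoly gpoly_def by (simp add: coeff_fpoly)
  moreover have "a d \<noteq> 0" using ad False by simp
  moreover have "(of_nat k - of_nat d :: rat) \<noteq> 0" using False by simp
  ultimately have "coeff (Npoly d k a) d \<noteq> 0" by simp
  thus ?thesis by auto
qed

lemma ev_Npoly: "ev (Npoly d k a) x = of_nat k * ev (gpoly d k a) x - x * ev (pderiv (gpoly d k a)) x"
  unfolding Npoly_def by simp

lemma ev_deriv: "((\<lambda>x::real. ev q x) has_real_derivative ev (pderiv q) x) (at x)"
  unfolding ev_def of_rat_hom.map_poly_pderiv by (rule poly_DERIV)

lemma hfun_deriv:
  assumes x: "x \<noteq> 0"
  shows "(hfun d k a has_real_derivative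
     ((- ev (pderiv (gpoly d k a)) x) * x ^ k - (- ev (gpoly d k a) x) * (of_nat k * x ^ (k - 1))) / (x ^ k * x ^ k)) (at x)"
proof -
  have 1: "((\<lambda>x. - ev (gpoly d k a) x) has_real_derivative - ev (pderiv (gpoly d k a)) x) (at x)"
    by (rule DERIV_minus[OF ev_deriv])
  have 2: "((\<lambda>x. x ^ k) has_real_derivative of_nat k * x ^ (k - 1)) (at x)"
    using DERIV_pow[of k x] by simp
  have 3: "x ^ k \<noteq> 0" using x by simp
  from DERIV_divide[OF 1 2 3] show ?thesis unfolding hfun_def[abs_def] .
qed

lemma hfun_crit:
  assumes x: "x \<noteq> 0"
    and z: "((- ev (pderiv (gpoly d k a)) x) * x ^ k - (- ev (gpoly d k a) x) * (of_nat k * x ^ (k - 1))) / (x ^ k * x ^ k) = 0"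
  shows "ev (Npoly d k a) (x::real) = 0"
proof -
  define g where "g = ev (gpoly d k a) x"
  define g' where "g' = ev (pderiv (gpoly d k a)) x"
  have num: "(- g') * x ^ k - (- g) * (of_nat k * x ^ (k - 1)) = 0" using z x unfolding g_def g'_def by simp
  have kx: "of_nat k * x ^ (k - 1) * x = of_nat k * x ^ k" by (cases k) (auto simp: mult_ac)
  have "x * ((- g') * x ^ k - (- g) * (of_nat k * x ^ (k - 1))) = - x * g' * x ^ k + g * (of_nat k * x ^ (k - 1) * x)"
    by (simp add: algebra_simps)
  also have "\<dots> = - x * g' * x ^ k + g * (of_nat k * x ^ k)" by (simp only: kx)
  also have "\<dots> = x ^ k * (of_nat k * g - x * g')" by (simp add: algebra_simps)
  finally have "x ^ k * (of_nat k * g - x * g') = 0" using num by simp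
  hence "of_nat k * g - x * g' = 0" using x by simp
  thus ?thesis unfolding ev_Npoly g_def g'_def .
qed

lemma hfun_root:
  assumes x: "x \<noteq> 0" and kd: "k \<le> d" and r: "ev (fpoly d k a t) (x::real) = 0"
  shows "hfun d k a x = of_rat t"
proof -
  have "ev (gpoly d k a) x + of_rat t * x ^ k = 0" using r by (simp add: ev_fpoly_split[OF kd])
  hence "- ev (gpoly d k a) x = of_rat t * x ^ k" by simp
  thus ?thesis unfolding hfun_def using x by simp
qed

lemma Bnd_ge: assumes N: "Npoly d k a \<noteq> 0" and c: "ev (Npoly d k a) c = 0"
  shows "\<bar>hfun d k a c\<bar> \<le> Bnd d k a"
proof -
  have "map_poly (of_rat :: rat \<Rightarrow> real) (Npoly d k a) \<noteq> 0" using N by simp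
  hence fin: "finite {x::real. ev (Npoly d k a) x = 0}" unfolding ev_def by (rule poly_roots_finite)
  show ?thesis unfolding Bnd_def by (rule member_le_sum) (use fin c in auto)
qed

lemma nonreal_root:
  fixes a :: "nat \<Rightarrow> rat"
  assumes d5: "5 \<le> d" and kd: "k \<le> d" and a0: "k \<noteq> 0 \<Longrightarrow> a 0 \<noteq> 0" and ad: "k \<noteq> d \<Longrightarrow> a d \<noteq> 0"
    and t0: "t \<noteq> 0" and irr: "irreducible (fpoly d k a t)" and big: "\<bar>real_of_rat t\<bar> > Bnd d k a"
  shows "\<exists>z::complex. z \<notin> \<real> \<and> ev (fpoly d k a t) z = 0"
proof (rule ccontr)
  assume "\<not> ?thesis"
  hence allreal: "\<And>z::complex. ev (fpoly d k a t) z = 0 \<Longrightarrow> z \<in> \<real>" by blast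
  define f where "f = fpoly d k a t"
  define Rt where "Rt = {z::complex. ev f z = 0}"
  have df: "degree f = d" unfolding f_def by (rule degree_fpoly) (use t0 ad in auto)
  have cRt: "card Rt = d" unfolding Rt_def using irr_card_roots[OF irr[folded f_def]] df by simp
  have finRt: "finite Rt" using cRt d5 by (intro card_ge_0_finite) simp
  define X where "X = Re ` Rt"
  have injRe: "inj_on Re Rt"
  proof (rule inj_onI)
    fix z w assume z: "z \<in> Rt" and w: "w \<in> Rt" and e: "Re z = Re w"
    have "z \<in> \<real>" "w \<in> \<real>" using z w allreal unfolding Rt_def f_def by auto
    hence "Im z = 0" "Im w = 0" by (auto simp: complex_is_Real_iff)
    thus "z = w" using e by (simp add: complex_eqI)
  qed
  have cX: "card X = d" unfolding X_def using card_image[OF injRe] cRt by simp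
  have finX: "finite X" unfolding X_def using finRt by simp
  have xroot: "ev f x = 0" if "x \<in> X" for x
  proof -
    from that obtain z where z: "z \<in> Rt" "x = Re z" unfolding X_def by blast
    have "z \<in> \<real>" using z allreal unfolding Rt_def f_def by auto
    hence "z = of_real x" using z by (simp add: complex_is_Real_iff complex_eqI)
    hence "ev f (of_real x :: complex) = 0" using z unfolding Rt_def by simp
    hence "(of_real (ev f x) :: complex) = 0" by (simp add: ev_real)
    thus ?thesis by simp
  qed
  have f0: "ev f (0::real) \<noteq> 0" unfolding ev_at0 f_def using t0 a0 by (auto simp: coeff_fpoly)
  have xnz: "x \<noteq> 0" if "x \<in> X" for x using xroot[OF that] f0 by auto
  define Xp where "Xp = X \<inter> {x. x > 0}"
  define Xn where "Xn = X \<inter> {x. x < 0}"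
  have XU: "X = Xp \<union> Xn" unfolding Xp_def Xn_def using xnz by (auto simp: neq_iff)
  have finXp: "finite Xp" unfolding Xp_def using finX by simp
  have finXn: "finite Xn" unfolding Xn_def using finX by simp
  have disj: "Xp \<inter> Xn = {}" unfolding Xp_def Xn_def by auto
  have "card X = card Xp + card Xn" unfolding XU by (rule card_Un_disjoint[OF finXp finXn disj])
  hence "card Xp \<ge> 3 \<or> card Xn \<ge> 3" using d5 cX by linarith
  then obtain Y where Y: "Y \<subseteq> X" "card Y \<ge> 3" "(\<forall>y\<in>Y. y > 0) \<or> (\<forall>y\<in>Y. y < 0)"
  proof
    assume "card Xp \<ge> 3"
    moreover have "Xp \<subseteq> X" "\<forall>y\<in>Xp. y > 0" unfolding Xp_def by auto
    ultimately show ?thesis using that by blast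
  next
    assume "card Xn \<ge> 3"
    moreover have "Xn \<subseteq> X" "\<forall>y\<in>Xn. y < 0" unfolding Xn_def by auto
    ultimately show ?thesis using that by blast
  qed
  have finY: "finite Y" using Y(1) finX finite_subset by blast
  from three_elems[OF finY Y(2)] obtain x1 x2 x3 where x: "x1 \<in> Y" "x2 \<in> Y" "x3 \<in> Y" "x1 < x2" "x2 < x3" by blast
  have nz: "x \<noteq> 0" if "x1 \<le> x" "x \<le> x3" for x
    using Y(3)
  proof
    assume "\<forall>y\<in>Y. y > 0"
    hence "x1 > 0" using x(1) by blast
    thus ?thesis using that by simp
  next
    assume "\<forall>y\<in>Y. y < 0"
    hence "x3 < 0" using x(3) by blast
    thus ?thesis using that by simp
  qed
  have N0: "Npoly d k a \<noteq> 0" by (rule Npoly_nz[OF kd _ a0 ad]) (use d5 in simp)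
  have hx: "hfun d k a xi = real_of_rat t" if "xi \<in> Y" for xi
  proof -
    have "xi \<in> X" using that Y(1) by blast
    from hfun_root[OF xnz[OF this] kd xroot[OF this, unfolded f_def]] show ?thesis .
  qed
  define h' :: "real \<Rightarrow> real" where "h' x = ((- ev (pderiv (gpoly d k a)) x) * x ^ k - (- ev (gpoly d k a) x) * (of_nat k * x ^ (k - 1))) / (x ^ k * x ^ k)" for x
  have der: "(hfun d k a has_real_derivative h' x) (at x)" if "x1 \<le> x" "x \<le> x3" for x
    unfolding h'_def by (rule hfun_deriv[OF nz[OF that]])
  from ext_crit[OF x(4,5) der hx[OF x(1)] hx[OF x(2)] hx[OF x(3)]]
  obtain c where c: "x1 < c" "c < x3" "h' c = 0" "\<bar>hfun d k a c\<bar> \<ge> \<bar>real_of_rat t\<bar>" by blast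
  have cnz: "c \<noteq> 0" using nz c by simp
  have "ev (Npoly d k a) c = 0" using hfun_crit[OF cnz] c(3) unfolding h'_def by blast
  hence "\<bar>hfun d k a c\<bar> \<le> Bnd d k a" using Bnd_ge[OF N0] by blast
  thus False using c(4) big by simp
qed


lemma common_denom:
  fixes a :: "nat \<Rightarrow> rat"
  assumes "finite I"
  shows "\<exists>D::int. D > 0 \<and> (\<forall>i\<in>I. \<exists>n::int. rat_of_int n = rat_of_int D * a i)"
  using assms
proof (induction I rule: finite_induct)
  case empty show ?case by (rule exI[of _ 1]) simp
next
  case (insert j I)
  then obtain D where D: "D > 0" "\<forall>i\<in>I. \<exists>n::int. rat_of_int n = rat_of_int D * a i" by blast
  obtain num den where q: "quotient_of (a j) = (num, den)" by force
  have den: "den > 0" using quotient_of_denom_pos[OF q] .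
  have aj: "a j = of_int num / of_int den" using quotient_of_div[OF q] .
  show ?case
  proof (rule exI[of _ "D * den"], intro conjI ballI)
    show "D * den > 0" using D den by simp
    fix i assume "i \<in> insert j I"
    show "\<exists>n::int. rat_of_int n = rat_of_int (D * den) * a i"
    proof (cases "i = j")
      case True
      show ?thesis using den by (intro exI[of _ "D * num"]) (simp add: True aj)
    next
      case False
      hence "i \<in> I" using \<open>i \<in> insert j I\<close> by simp
      then obtain n where "rat_of_int n = rat_of_int D * a i" using D by blast
      thus ?thesis by (intro exI[of _ "n * den"]) (simp add: algebra_simps)
    qed
  qed
qed

lemma cmod_prod_neg: "cmod (\<Prod>z\<leftarrow>zs. - z) = (\<Prod>z\<leftarrow>zs. cmod z)"
  by (induction zs) (auto simp: norm_mult)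

lemma int_factor_roots:
  fixes G :: "int poly"
  shows "\<exists>zs::complex list. length zs = degree G \<and> (\<forall>z\<in>set zs. poly (map_poly of_int G) z = 0) \<and>
     \<bar>real_of_int (coeff G 0)\<bar> = \<bar>real_of_int (lead_coeff G)\<bar> * (\<Prod>z\<leftarrow>zs. cmod z)"
proof -
  define Gc where "Gc = map_poly (of_int :: int \<Rightarrow> complex) G"
  obtain as where as: "smult (lead_coeff Gc) (\<Prod>a\<leftarrow>as. [:- a, 1:]) = Gc" "length as = degree Gc"
    using fundamental_theorem_algebra_factorized[of Gc] by blast
  have dG: "degree Gc = degree G" unfolding Gc_def by simp
  have lc: "lead_coeff Gc = of_int (lead_coeff G)" unfolding Gc_def by simp
  have roots: "poly Gc z = 0" if "z \<in> set as" for z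
  proof -
    have "poly (\<Prod>a\<leftarrow>as. [:- a, 1:]) z = (\<Prod>a\<leftarrow>as. z - a)" by (induction as) (auto simp: algebra_simps)
    also have "\<dots> = 0" using that by (induction as) auto
    finally have "poly (\<Prod>a\<leftarrow>as. [:- a, 1:]) z = 0" .
    moreover have "lead_coeff Gc * poly (\<Prod>a\<leftarrow>as. [:- a, 1:]) z = poly Gc z"
      using arg_cong[OF as(1), of "\<lambda>p. poly p z"] by simp
    ultimately show ?thesis by simp
  qed
  have "poly Gc 0 = lead_coeff Gc * (\<Prod>a\<leftarrow>as. - a)"
  proof -
    have "poly (\<Prod>a\<leftarrow>as. [:- a, 1:]) 0 = (\<Prod>a\<leftarrow>as. - a)" by (induction as) auto
    moreover have "lead_coeff Gc * poly (\<Prod>a\<leftarrow>as. [:- a, 1:]) 0 = poly Gc 0"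
      using arg_cong[OF as(1), of "\<lambda>p. poly p 0"] by simp
    ultimately show ?thesis by simp
  qed
  hence "cmod (poly Gc 0) = cmod (lead_coeff Gc) * (\<Prod>a\<leftarrow>as. cmod a)" by (simp add: norm_mult cmod_prod_neg)
  moreover have "poly Gc 0 = of_int (coeff G 0)" unfolding Gc_def by (simp add: poly_0_coeff_0)
  ultimately have "\<bar>real_of_int (coeff G 0)\<bar> = \<bar>real_of_int (lead_coeff G)\<bar> * (\<Prod>a\<leftarrow>as. cmod a)"
    using lc by (metis norm_of_int)
  thus ?thesis using as(2) dG roots unfolding Gc_def by (intro exI[of _ as]) auto
qed

lemma dvd_abs_le: fixes x y :: int assumes "x dvd y" "y \<noteq> 0" shows "\<bar>x\<bar> \<le> \<bar>y\<bar>"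
proof -
  obtain c where c: "y = x * c" using assms(1) by (elim dvdE)
  hence "c \<noteq> 0" using assms(2) by auto
  hence "\<bar>x\<bar> * 1 \<le> \<bar>x\<bar> * \<bar>c\<bar>" by (intro mult_left_mono) auto
  thus ?thesis using c by (simp add: abs_mult)
qed

lemma not_p2_dvd: fixes p n :: int assumes "prime p" "n \<noteq> 0" "\<bar>n\<bar> < p" shows "\<not> p^2 dvd p * n"
proof
  assume "p^2 dvd p * n"
  hence "p * p dvd p * n" by (simp add: power2_eq_square)
  hence "p dvd n" using assms(1) by (simp add: prime_gt_0_int)
  hence "\<bar>p\<bar> \<le> \<bar>n\<bar>" using assms(2) by (rule dvd_abs_le)
  thus False using assms(3) by simp
qed

lemma dvd_sq_aux1: fixes d k :: nat assumes "k \<le> d" "d dvd k * (d - k)" shows "d dvd k^2"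
proof -
  have "k * (d - k) + k^2 = k * d" using assms(1) by (simp add: power2_eq_square diff_mult_distrib2)
  hence "d dvd k * (d - k) + k^2" by simp
  thus ?thesis using assms(2) by (simp add: dvd_add_right_iff)
qed

lemma dvd_sq_aux2: fixes d k :: nat assumes "k \<le> d" "d dvd (d - k) * (d - k)" shows "d dvd k^2"
proof -
  have "int d dvd int ((d - k) * (d - k))" using assms(2) by (simp only: int_dvd_int_iff)
  hence "int d dvd (int d - int k) * (int d - int k)" using assms(1) by (simp add: of_nat_diff)
  moreover have "(int d - int k) * (int d - int k) = int d * (int d - 2 * int k) + int k ^ 2"
    by (simp add: algebra_simps power2_eq_square)
  ultimately have "int d dvd int d * (int d - 2 * int k) + int k ^ 2" by simp
  hence "int d dvd int k ^ 2" by (simp add: dvd_add_right_iff)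
  hence "int d dvd int (k ^ 2)" by simp
  thus ?thesis by (simp only: int_dvd_int_iff)
qed

lemma last_move:
  fixes a :: "nat \<Rightarrow> rat"
  assumes d5: "5 \<le> d" and kd: "k \<le> d" and a0: "k \<noteq> 0 \<Longrightarrow> a 0 \<noteq> 0" and ad: "k \<noteq> d \<Longrightarrow> a d \<noteq> 0"
    and good: "k = 0 \<or> k = d \<or> \<not> d dvd k^2"
  shows "\<exists>t. t \<noteq> 0 \<and> (\<forall>z::complex. ev (fpoly d k a t) z = 0 \<longrightarrow> z \<notin> Qab)"
proof -
  obtain D where D: "D > 0" "\<forall>i\<in>{..d}. \<exists>n::int. rat_of_int n = rat_of_int D * a i"
    using common_denom[of "{..d}" a] by auto
  define nn where "nn i = (SOME n::int. rat_of_int n = rat_of_int D * a i)" for i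
  have nn: "rat_of_int (nn i) = rat_of_int D * a i" if "i \<le> d" for i
  proof -
    have "\<exists>n::int. rat_of_int n = rat_of_int D * a i" using D(2) that by simp
    thus ?thesis unfolding nn_def by (rule someI_ex)
  qed
  have nnz: "nn i \<noteq> 0" if "i \<le> d" "a i \<noteq> 0" for i
  proof
    assume "nn i = 0"
    hence "rat_of_int D * a i = 0" using nn[OF that(1)] by simp
    thus False using D(1) that(2) by simp
  qed
  obtain pn :: nat where pn: "prime pn" "nat (D + (\<Sum>i\<le>d. \<bar>nn i\<bar>)) < pn" using bigger_prime by blast
  define p where "p = int pn"
  have pp: "prime p" using pn(1) unfolding p_def by (simp add: prime_nat_int_transfer)
  have p1: "p > 1" using pp by (simp add: prime_gt_1_int)
  have Sn: "(\<Sum>i\<le>d. \<bar>nn i\<bar>) \<ge> 0" by (simp add: sum_nonneg)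
  have DS: "D + (\<Sum>i\<le>d. \<bar>nn i\<bar>) < p" using pn(2) D(1) Sn unfolding p_def by linarith
  have pD: "D < p" using DS Sn by linarith
  have pnn: "\<bar>nn i\<bar> < p" if "i \<le> d" for i
  proof -
    have "\<bar>nn i\<bar> \<le> (\<Sum>i\<le>d. \<bar>nn i\<bar>)" by (rule member_le_sum) (use that in auto)
    thus ?thesis using DS D(1) by linarith
  qed
  define c where "c = (if k = 0 then a d else a 0)"
  have c0: "c \<noteq> 0" unfolding c_def using a0 ad d5 by auto
  define \<sigma> :: int where "\<sigma> = (if c > 0 then -1 else 1)"
  have sig: "\<bar>\<sigma>\<bar> = 1" unfolding \<sigma>_def by simp
  define X0 where "X0 = max 1 \<bar>real_of_int (p * nn 0)\<bar>"
  define Xd where "Xd = max 1 \<bar>real_of_int (p * nn d)\<bar>"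
  have X01: "X0 \<ge> 1" "Xd \<ge> 1" unfolding X0_def Xd_def by auto
  have XX: "X0 * Xd \<ge> 1" using mult_mono[OF X01(1) X01(2)] X01 by simp
  define L :: real where "L = 1 / (X0 * Xd)"
  have L: "0 < L" "L \<le> 1" unfolding L_def using XX by auto
  obtain Ta where Ta: "0 < k \<and> k < d \<longrightarrow> (\<forall>t zs. \<bar>real_of_rat t\<bar> \<ge> Ta \<longrightarrow> (\<forall>z\<in>set zs. ev (fpoly d k a t) z = 0) \<longrightarrow> length zs \<le> d \<longrightarrow>
           \<not> d dvd (length zs * (d - k)) \<longrightarrow> \<not> (L \<le> (\<Prod>z\<leftarrow>zs. cmod z) \<and> (\<Prod>z\<leftarrow>zs. cmod z) \<le> 1 / L))"
  proof (cases "0 < k \<and> k < d")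
    case True
    hence "a 0 \<noteq> 0" "a d \<noteq> 0" using a0 ad by auto
    from arch[of k d a L] True this L obtain T where "\<forall>t zs. \<bar>real_of_rat t\<bar> \<ge> T \<longrightarrow> (\<forall>z\<in>set zs. ev (fpoly d k a t) z = 0) \<longrightarrow> length zs \<le> d \<longrightarrow>
           \<not> d dvd (length zs * (d - k)) \<longrightarrow> \<not> (L \<le> (\<Prod>z\<leftarrow>zs. cmod z) \<and> (\<Prod>z\<leftarrow>zs. cmod z) \<le> 1 / L)" by blast
    thus ?thesis using that by blast
  next
    case False thus ?thesis using that by blast
  qed
  define Tb where "Tb = max (max Ta (Bnd d k a + 1)) (max ((\<Sum>i\<le>d. \<bar>real_of_rat (a i)\<bar>) + 1) 1)"
  define N :: int where "N = \<lceil>Tb\<rceil> + 1"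
  define M where "M = 1 + p * N"
  define t where "t = rat_of_int (\<sigma> * M) / rat_of_int p"
  have Tb1: "Tb \<ge> 1" unfolding Tb_def by simp
  have NT: "real_of_int N > Tb" unfolding N_def by linarith
  have N1: "N \<ge> 1" using NT Tb1 by linarith
  have Mp: "M > 0" unfolding M_def using N1 p1 by (simp add: add_pos_pos)
  have tr: "real_of_rat t = real_of_int (\<sigma> * M) / real_of_int p" unfolding t_def
    by (simp add: of_rat_divide of_rat_mult)
  have "\<bar>real_of_rat t\<bar> = \<bar>real_of_int \<sigma>\<bar> * \<bar>real_of_int M\<bar> / \<bar>real_of_int p\<bar>"
    unfolding tr by (simp only: abs_divide abs_mult of_int_mult)
  also have "\<dots> = real_of_int M / real_of_int p" using sig Mp p1 by simp
  finally have tabs: "\<bar>real_of_rat t\<bar> = real_of_int M / real_of_int p" .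
  have "real_of_int M = 1 + real_of_int p * real_of_int N" unfolding M_def by simp
  hence "real_of_int M / real_of_int p = 1 / real_of_int p + real_of_int p * real_of_int N / real_of_int p"
    by (simp add: add_divide_distrib)
  also have "\<dots> = 1 / real_of_int p + real_of_int N" using p1 by simp
  finally have "real_of_int M / real_of_int p = 1 / real_of_int p + real_of_int N" .
  moreover have "1 / real_of_int p > 0" using p1 by simp
  ultimately have tbig: "\<bar>real_of_rat t\<bar> > Tb" using tabs NT by linarith
  have t0: "t \<noteq> 0"
  proof
    assume "t = 0"
    hence "real_of_rat t = 0" by simp
    thus False using tbig Tb1 by linarith
  qed
  have tsign: "real_of_rat t * real_of_rat c < 0"
  proof (cases "c > 0")
    case True
    hence "real_of_rat t < 0" unfolding tr \<sigma>_def using Mp p1 by (simp add: divide_neg_pos)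
    moreover have "real_of_rat c > 0" using True by simp
    ultimately show ?thesis by (simp add: mult_neg_pos)
  next
    case False
    hence "c < 0" using c0 by simp
    hence "real_of_rat c < 0" by simp
    moreover have "real_of_rat t > 0" unfolding tr \<sigma>_def using Mp p1 False by simp
    ultimately show ?thesis by (simp add: mult_pos_neg)
  qed
  let ?f = "fpoly d k a t"
  have df: "degree ?f = d" by (rule degree_fpoly) (use t0 ad in auto)
  define F :: "int poly" where "F = (\<Sum>i\<le>d. Polynomial.monom (if i = k then \<sigma> * D * M else p * nn i) i)"
  have cF: "coeff F j = (if j \<le> d then (if j = k then \<sigma> * D * M else p * nn j) else 0)" for j
    unfolding F_def by (auto simp: coeff_sum coeff_monom)
  have mapF: "map_poly rat_of_int F = smult (rat_of_int (p * D)) ?f"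
  proof (rule poly_eqI)
    fix j
    show "coeff (map_poly rat_of_int F) j = coeff (smult (rat_of_int (p * D)) ?f) j"
    proof (cases "j \<le> d")
      case True
      show ?thesis
      proof (cases "j = k")
        case True
        thus ?thesis using \<open>j \<le> d\<close> p1 unfolding t_def by (simp add: cF coeff_fpoly field_simps)
      next
        case False
        thus ?thesis using \<open>j \<le> d\<close> nn[of j] by (simp add: cF coeff_fpoly)
      qed
    next
      case False thus ?thesis by (simp add: cF coeff_fpoly)
    qed
  qed
  have dF: "degree F = d"
  proof (rule antisym)
    show "degree F \<le> d" by (rule degree_le) (simp add: cF)
    have "coeff F d \<noteq> 0"
    proof (cases "d = k")
      case True thus ?thesis using D(1) Mp sig by (auto simp: cF)
    next
      case False thus ?thesis using nnz[of d] ad p1 by (auto simp: cF)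
    qed
    thus "d \<le> degree F" by (rule le_degree)
  qed
  have ndk: "\<not> p dvd \<sigma> * D * M"
  proof
    assume h: "p dvd \<sigma> * D * M"
    have "\<sigma> = 1 \<or> \<sigma> = -1" unfolding \<sigma>_def by simp
    hence "\<not> p dvd \<sigma>" using p1 by (auto simp: zdvd1_eq)
    moreover have "\<not> p dvd D" using D(1) pD by (auto dest: zdvd_imp_le)
    moreover have "\<not> p dvd M"
    proof
      assume "p dvd M"
      hence "p dvd 1" unfolding M_def by (simp add: dvd_add_left_iff)
      thus False using p1 by simp
    qed
    ultimately show False using h pp by (simp add: prime_dvd_mult_iff)
  qed
  have irr: "irreducible ?f"
  proof -
    have f0: "?f \<noteq> 0" using df d5 by auto
    have nu: "\<not> is_unit ?f" using df d5 f0 is_unit_iff_degree by auto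
    show ?thesis unfolding irreducible_def
    proof (intro conjI allI impI f0 nu)
      fix A B assume AB: "?f = A * B"
      show "is_unit A \<or> is_unit B"
      proof (rule ccontr)
        assume nAB: "\<not> (is_unit A \<or> is_unit B)"
        have A0: "A \<noteq> 0" and B0: "B \<noteq> 0" using f0 AB by auto
        have dA: "degree A > 0" using nAB A0 is_unit_iff_degree by auto
        have dB: "degree B > 0" using nAB B0 is_unit_iff_degree by auto
        have pD0: "rat_of_int (p * D) \<noteq> 0" using p1 D(1) by simp
        have "map_poly rat_of_int F = smult (rat_of_int (p * D)) A * B" using mapF AB by simp
        from rat_to_int_factor[OF this] obtain G H where GH: "F = G * H"
          "degree G = degree (smult (rat_of_int (p * D)) A)" "degree H = degree B" by blast
        have dG: "degree G > 0" using GH(2) dA pD0 by simp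
        have dH: "degree H > 0" using GH(3) dB by simp
        have oth: "p dvd coeff F i" if "i \<noteq> k" for i using that by (simp add: cF)
        have ndk': "\<not> p dvd coeff F k" using ndk kd by (simp add: cF)
        have n0: "\<not> p^2 dvd coeff F 0" if "k \<noteq> 0"
        proof -
          have "coeff F 0 = p * nn 0" using that by (simp add: cF)
          moreover have "nn 0 \<noteq> 0" using nnz[of 0] a0 that by simp
          ultimately show ?thesis using not_p2_dvd[OF pp _ pnn[of 0]] by simp
        qed
        have nd: "\<not> p^2 dvd coeff F d" if "k \<noteq> d"
        proof -
          have "coeff F d = p * nn d" using that by (simp add: cF)
          moreover have "nn d \<noteq> 0" using nnz[of d] ad that by simp
          ultimately show ?thesis using not_p2_dvd[OF pp _ pnn[of d]] by simp
        qed
        from modp[OF pp GH(1) dF oth ndk' n0 nd dG dH]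
        have kk: "0 < k" "k < d" "degree G = k \<or> degree G = d - k" by auto
        have ndk2: "\<not> d dvd k^2" using good kk by auto
        have ndv: "\<not> d dvd (degree G * (d - k))"
        proof
          assume h: "d dvd (degree G * (d - k))"
          from kk(3) show False
          proof
            assume "degree G = k" thus False using h dvd_sq_aux1[OF kd] ndk2 by simp
          next
            assume "degree G = d - k" thus False using h dvd_sq_aux2[OF kd] ndk2 by simp
          qed
        qed
        obtain zs :: "complex list" where zs: "length zs = degree G" "\<forall>z\<in>set zs. poly (map_poly of_int G) z = 0"
          "\<bar>real_of_int (coeff G 0)\<bar> = \<bar>real_of_int (lead_coeff G)\<bar> * (\<Prod>z\<leftarrow>zs. cmod z)"
          using int_factor_roots[of G] by blast
        have Fc: "poly (map_poly (of_int :: int \<Rightarrow> complex) F) z = of_int (p * D) * ev ?f z" for z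
        proof -
          have "map_poly (of_int :: int \<Rightarrow> complex) F = map_poly of_rat (map_poly rat_of_int F)"
            by (simp add: map_poly_map_poly o_def)
          also have "\<dots> = smult (of_int (p * D)) (map_poly of_rat ?f)" unfolding mapF by (simp add: hom_distribs)
          finally show ?thesis unfolding ev_def by simp
        qed
        have zroots: "\<forall>z\<in>set zs. ev ?f z = 0"
        proof
          fix z assume "z \<in> set zs"
          hence "poly (map_poly (of_int :: int \<Rightarrow> complex) G) z = 0" using zs(2) by blast
          hence "poly (map_poly (of_int :: int \<Rightarrow> complex) F) z = 0" unfolding GH(1) by (simp add: hom_distribs)
          thus "ev ?f z = 0" using Fc[of z] p1 D(1) by simp
        qed
        have F0: "coeff F 0 = coeff G 0 * coeff H 0" unfolding GH(1) by (simp add: coeff_mult_0)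
        have F0v: "coeff F 0 = p * nn 0" using kk by (simp add: cF)
        have F0nz: "coeff F 0 \<noteq> 0" using F0v nnz[of 0] a0 kk p1 by simp
        have Fd: "coeff F d = lead_coeff G * lead_coeff H"
        proof -
          have "coeff F d = lead_coeff F" using dF by simp
          also have "\<dots> = lead_coeff G * lead_coeff H" unfolding GH(1) by (rule lead_coeff_mult)
          finally show ?thesis .
        qed
        have Fdv: "coeff F d = p * nn d" using kk by (simp add: cF)
        have Fdnz: "coeff F d \<noteq> 0" using Fdv nnz[of d] ad kk p1 by simp
        have G0nz: "coeff G 0 \<noteq> 0" using F0 F0nz by auto
        have G0le: "\<bar>coeff G 0\<bar> \<le> \<bar>p * nn 0\<bar>" using dvd_abs_le[of "coeff G 0" "coeff F 0"] F0 F0nz F0v by simp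
        have lGnz: "lead_coeff G \<noteq> 0" using Fd Fdnz by auto
        have lGle: "\<bar>lead_coeff G\<bar> \<le> \<bar>p * nn d\<bar>" using dvd_abs_le[of "lead_coeff G" "coeff F d"] Fd Fdnz Fdv by simp
        define Q where "Q = (\<Prod>z\<leftarrow>zs. cmod z)"
        have Qeq: "Q = \<bar>real_of_int (coeff G 0)\<bar> / \<bar>real_of_int (lead_coeff G)\<bar>"
          using zs(3) lGnz unfolding Q_def by (simp add: field_simps)
        have g1: "\<bar>real_of_int (coeff G 0)\<bar> \<ge> 1" using G0nz by linarith
        have l1: "\<bar>real_of_int (lead_coeff G)\<bar> \<ge> 1" using lGnz by linarith
        have g2: "\<bar>real_of_int (coeff G 0)\<bar> \<le> \<bar>real_of_int (p * nn 0)\<bar>" using G0le by linarith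
        have l2: "\<bar>real_of_int (lead_coeff G)\<bar> \<le> \<bar>real_of_int (p * nn d)\<bar>" using lGle by linarith
        have LX: "L = 1 / (X0 * Xd)" unfolding L_def ..
        have QU: "Q \<le> 1 / L"
        proof -
          have gl: "\<bar>real_of_int (coeff G 0)\<bar> * 1 \<le> \<bar>real_of_int (coeff G 0)\<bar> * \<bar>real_of_int (lead_coeff G)\<bar>"
            using l1 by (intro mult_left_mono) auto
          have "Q \<le> \<bar>real_of_int (coeff G 0)\<bar>" unfolding Qeq using l1 gl
            by (subst divide_le_eq) (auto simp: mult.commute)
          also have "\<dots> \<le> X0" using g2 unfolding X0_def by simp
          also have "\<dots> \<le> X0 * Xd" using X01 by simp
          also have "\<dots> = 1 / L" unfolding LX by simp
          finally show ?thesis .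
        qed
        have QL: "L \<le> Q"
        proof -
          have "L \<le> 1 / Xd" unfolding LX using X01 by (simp add: field_simps)
          also have "\<dots> \<le> 1 / \<bar>real_of_int (lead_coeff G)\<bar>"
          proof -
            have lX: "\<bar>real_of_int (lead_coeff G)\<bar> \<le> Xd" using l2 unfolding Xd_def by simp
            have pos: "0 < Xd * \<bar>real_of_int (lead_coeff G)\<bar>" using X01 l1 by (intro mult_pos_pos) auto
            show ?thesis by (rule divide_left_mono[OF lX _ pos]) simp
          qed
          also have "\<dots> \<le> Q" unfolding Qeq using g1 l1 by (simp add: divide_right_mono)
          finally show ?thesis .
        qed
        have "G \<noteq> 0" "H \<noteq> 0" using dG dH by auto
        hence "degree F = degree G + degree H" unfolding GH(1) by (rule degree_mult_eq)
        hence "degree G \<le> d" using dF by simp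
        hence lz: "length zs \<le> d" using zs(1) by simp
        have Tat: "Ta \<le> \<bar>real_of_rat t\<bar>" using tbig unfolding Tb_def by simp
        have H: "\<forall>t zs. \<bar>real_of_rat t\<bar> \<ge> Ta \<longrightarrow> (\<forall>z\<in>set zs. ev (fpoly d k a t) z = 0) \<longrightarrow> length zs \<le> d \<longrightarrow>
           \<not> d dvd (length zs * (d - k)) \<longrightarrow> \<not> (L \<le> (\<Prod>z\<leftarrow>zs. cmod z) \<and> (\<Prod>z\<leftarrow>zs. cmod z) \<le> 1 / L)"
          using Ta kk(1) kk(2) by blast
        have nd': "\<not> d dvd (length zs * (d - k))" using ndv zs(1) by simp
        have "\<not> (L \<le> Q \<and> Q \<le> 1 / L)" unfolding Q_def
          using spec[OF spec[OF H, of t], of zs] Tat zroots lz nd' by blast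
        thus False using QU QL by simp
      qed
    qed
  qed
  have realroot: "\<exists>x::real. ev ?f x = 0"
  proof (cases "k = 0")
    case True
    have "a d \<noteq> 0" using ad True d5 by simp
    moreover have "real_of_rat t * real_of_rat (a d) < 0" using tsign True unfolding c_def by simp
    ultimately show ?thesis using real_root_zero[of d a t] True d5 by simp
  next
    case False
    have "real_of_rat t * real_of_rat (a 0) < 0" using tsign False unfolding c_def by simp
    moreover have "\<bar>real_of_rat t\<bar> > (\<Sum>i\<le>d. \<bar>real_of_rat (a i)\<bar>)" using tbig unfolding Tb_def by simp
    ultimately show ?thesis using real_root_pos[of k d a t] False kd a0 by simp
  qed
  then obtain x :: real where x: "ev ?f x = 0" by blast
  have xc: "ev ?f (complex_of_real x) = 0" using x ev_real[of ?f x] by simp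
  have "\<bar>real_of_rat t\<bar> > Bnd d k a" using tbig unfolding Tb_def by simp
  from nonreal_root[OF d5 kd a0 ad t0 irr this] obtain z0 :: complex where z0: "z0 \<notin> \<real>" "ev ?f z0 = 0" by blast
  have "\<forall>z::complex. ev ?f z = 0 \<longrightarrow> z \<notin> Qab"
    using no_abelian_root[OF irr xc z0(2) z0(1)] by blast
  thus ?thesis using t0 by blast
qed


definition freeset :: "nat \<Rightarrow> (nat \<Rightarrow> rat option) \<Rightarrow> nat set" where
  "freeset d s = {i. i \<le> d \<and> s i = None}"
definition badset :: "nat \<Rightarrow> nat set" where
  "badset d = {k. 0 < k \<and> k < d \<and> d dvd k^2}"
definition Inv :: "nat \<Rightarrow> nat \<Rightarrow> (nat \<Rightarrow> rat option) \<Rightarrow> bool" where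
  "Inv d r s \<longleftrightarrow> card (freeset d s) = r \<and> s 0 \<noteq> Some 0 \<and> s d \<noteq> Some 0 \<and>
     card (freeset d s \<inter> badset d) \<le> (r - 1) div 2"

lemma finite_freeset: "finite (freeset d s)" unfolding freeset_def by simp

lemma freeset_upd: "freeset d (s(i := Some v)) = freeset d s - {i}"
  unfolding freeset_def by auto

lemma final_poly_eq: "final_poly d (s(k := Some t)) = fpoly d k (\<lambda>i. the (s i)) t"
  unfolding final_poly_def fpoly_def by (rule sum.cong) auto

lemma card_bad: assumes d: "d \<ge> 2" shows "card (badset d) \<le> d div 2"
proof -
  have inj: "inj_on (\<lambda>k. k div 2) (badset d)"
  proof (rule inj_onI)
    fix x y assume x: "x \<in> badset d" and y: "y \<in> badset d" and e: "x div 2 = y div 2"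
    show "x = y"
    proof (rule ccontr)
      assume "x \<noteq> y"
      hence "y = Suc x \<or> x = Suc y" using e by presburger
      then obtain u where u: "d dvd u^2" "d dvd (Suc u)^2" using x y unfolding badset_def by blast
      have "d \<noteq> 1" using d by simp
      then obtain q :: nat where q: "prime q" "q dvd d" using prime_factor_nat by blast
      have "q dvd u^2" "q dvd (Suc u)^2" using q(2) u dvd_trans by blast+
      hence "q dvd u" "q dvd Suc u" using q(1) prime_dvd_power by blast+
      hence "q dvd 1" using dvd_diff_nat[of q "Suc u" u] by simp
      thus False using q(1) by simp
    qed
  qed
  have img: "(\<lambda>k. k div 2) ` badset d \<subseteq> {1..(d - 1) div 2}"
  proof
    fix y assume "y \<in> (\<lambda>k. k div 2) ` badset d"
    then obtain k where k: "k \<in> badset d" "y = k div 2" by blast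
    have k1: "k \<noteq> 1"
    proof
      assume "k = 1"
      hence "d dvd 1" using k(1) unfolding badset_def by simp
      thus False using d by simp
    qed
    have "0 < k" "k < d" using k(1) unfolding badset_def by auto
    hence "2 \<le> k" "k \<le> d - 1" using k1 by auto
    thus "y \<in> {1..(d - 1) div 2}" using k(2) by (auto intro: div_le_mono)
  qed
  have "card (badset d) \<le> card {1..(d - 1) div 2}"
    by (rule card_inj_on_le[OF inj img]) simp
  also have "\<dots> \<le> d div 2" by simp
  finally show ?thesis .
qed

lemma game:
  assumes d5: "5 \<le> d"
  shows "r \<ge> 1 \<Longrightarrow> Inv d r s \<Longrightarrow> nora_wins d r s"
proof (induction r arbitrary: s)
  case 0 thus ?case by simp
next
  case (Suc r s)
  note inv = Suc.prems(2)
  have cf: "card (freeset d s) = Suc r" and s0: "s 0 \<noteq> Some 0" and sd: "s d \<noteq> Some 0"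
    and cb: "card (freeset d s \<inter> badset d) \<le> r div 2"
    using inv unfolding Inv_def by auto
  show ?case
  proof (cases "r = 0")
    case True
    then obtain k where fk: "freeset d s = {k}" using cf card_1_singletonE by auto
    have kd: "k \<le> d" "s k = None" using fk unfolding freeset_def by auto
    have "card (freeset d s \<inter> badset d) = 0" using cb True by simp
    hence "k \<notin> badset d" using fk by auto
    hence good: "k = 0 \<or> k = d \<or> \<not> d dvd k^2" using kd unfolding badset_def by auto
    define a where "a i = the (s i)" for i
    have a0: "a 0 \<noteq> 0" if "k \<noteq> 0"
    proof -
      have "0 \<notin> freeset d s" using fk that by auto
      hence "s 0 \<noteq> None" unfolding freeset_def by auto
      then obtain v where "s 0 = Some v" by auto
      thus ?thesis using s0 unfolding a_def by auto
    qed
    have ad: "a d \<noteq> 0" if "k \<noteq> d"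
    proof -
      have "d \<notin> freeset d s" using fk that by auto
      hence "s d \<noteq> None" unfolding freeset_def by auto
      then obtain v where "s d = Some v" by auto
      thus ?thesis using sd unfolding a_def by auto
    qed
    from last_move[OF d5 kd(1) a0 ad good] obtain t where t: "t \<noteq> 0"
      "\<forall>z::complex. ev (fpoly d k a t) z = 0 \<longrightarrow> z \<notin> Qab" by blast
    have leg: "legal_move d s k t" unfolding legal_move_def using kd t(1) by simp
    have goal: "nora_goal d (s(k := Some t))"
      unfolding nora_goal_def final_poly_eq using t(2) unfolding ev_def a_def by blast
    show ?thesis using True leg goal by auto
  next
    case False
    hence r1: "r \<ge> 1" by simp
    have fin: "finite (freeset d s)" by (rule finite_freeset)
    show ?thesis
    proof (cases "odd (Suc r)")
      case oddr: True
      have nemp: "freeset d s \<noteq> {}" using cf by auto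
      define i where "i = (if freeset d s \<inter> badset d \<noteq> {} then (SOME i. i \<in> freeset d s \<inter> badset d)
                           else (SOME i. i \<in> freeset d s))"
      have ifb: "i \<in> freeset d s \<inter> badset d" if ne: "freeset d s \<inter> badset d \<noteq> {}"
      proof -
        have "\<exists>x. x \<in> freeset d s \<inter> badset d" using ne by blast
        hence "(SOME i. i \<in> freeset d s \<inter> badset d) \<in> freeset d s \<inter> badset d" by (rule someI_ex)
        thus ?thesis unfolding i_def using ne by simp
      qed
      have ifree: "i \<in> freeset d s"
      proof (cases "freeset d s \<inter> badset d \<noteq> {}")
        case True thus ?thesis using ifb by blast
      next
        case False
        have "\<exists>x. x \<in> freeset d s" using nemp by blast
        hence "(SOME i. i \<in> freeset d s) \<in> freeset d s" by (rule someI_ex)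
        thus ?thesis unfolding i_def using False by simp
      qed
      have ibad: "freeset d s \<inter> badset d \<noteq> {} \<Longrightarrow> i \<in> badset d" using ifb by blast
      have leg: "legal_move d s i 1" using ifree unfolding legal_move_def freeset_def by simp
      let ?s' = "s(i := Some 1)"
      have inv': "Inv d r ?s'"
        unfolding Inv_def
      proof (intro conjI)
        show "card (freeset d ?s') = r" unfolding freeset_upd using cf ifree fin by simp
        show "?s' 0 \<noteq> Some 0" using s0 by simp
        show "?s' d \<noteq> Some 0" using sd by simp
        show "card (freeset d ?s' \<inter> badset d) \<le> (r - 1) div 2"
        proof (cases "freeset d s \<inter> badset d = {}")
          case True
          hence "freeset d ?s' \<inter> badset d = {}" unfolding freeset_upd by auto
          thus ?thesis by simp
        next
          case False
          hence ib: "i \<in> freeset d s \<inter> badset d" using ibad ifree by simp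
          have "freeset d ?s' \<inter> badset d = (freeset d s \<inter> badset d) - {i}" unfolding freeset_upd by auto
          hence "card (freeset d ?s' \<inter> badset d) = card (freeset d s \<inter> badset d) - 1"
            using ib fin by simp
          moreover have "even r" using oddr by simp
          then obtain m where m: "r = 2 * m" by (elim evenE)
          have "m \<noteq> 0" using m r1 by simp
          then obtain m' where m': "m = Suc m'" by (cases m) auto
          have "(r - 1) div 2 = m'" "r div 2 = Suc m'" using m m' by simp_all
          ultimately show ?thesis using cb by simp
        qed
      qed
      have nw: "nora_wins d r ?s'" using Suc.IH[OF r1 inv'] .
      have eq: "nora_wins d (Suc r) s = (\<exists>i v. legal_move d s i v \<and> nora_wins d r (s(i := Some v)))"
        using oddr by simp
      show ?thesis unfolding eq using leg nw by blast
    next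
      case False
      have "nora_wins d r (s(i := Some v))" if leg: "legal_move d s i v" for i v
      proof -
        have ifree: "i \<in> freeset d s" using leg unfolding legal_move_def freeset_def by simp
        let ?s' = "s(i := Some v)"
        have inv': "Inv d r ?s'"
          unfolding Inv_def
        proof (intro conjI)
          show "card (freeset d ?s') = r" unfolding freeset_upd using cf ifree fin by simp
          show "?s' 0 \<noteq> Some 0" using s0 leg unfolding legal_move_def by auto
          show "?s' d \<noteq> Some 0" using sd leg unfolding legal_move_def by auto
          have "card (freeset d ?s' \<inter> badset d) \<le> card (freeset d s \<inter> badset d)"
            unfolding freeset_upd by (rule card_mono) (use fin in auto)
          moreover have "odd r" using False by simp
          then obtain m where m: "r = 2 * m + 1" by (elim oddE)
          have "(r - 1) div 2 = m" "r div 2 = m" using m by simp_all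
          ultimately show "card (freeset d ?s' \<inter> badset d) \<le> (r - 1) div 2" using cb by simp
        qed
        show ?thesis using Suc.IH[OF r1 inv'] .
      qed
      hence all: "\<forall>i v. legal_move d s i v \<longrightarrow> nora_wins d r (s(i := Some v))" by blast
      have eq: "nora_wins d (Suc r) s = (\<forall>i v. legal_move d s i v \<longrightarrow> nora_wins d r (s(i := Some v)))"
        using False by simp
      show ?thesis unfolding eq using all .
    qed
  qed
qed

theorem proposition4:
  fixes d :: nat
  assumes "d > 8"
  shows "nora_wins d (d + 1) (\<lambda>_. None)"
proof -
  have d5: "5 \<le> d" using assms by simp
  have fr: "freeset d (\<lambda>_. None) = {..d}" unfolding freeset_def by auto
  have "badset d \<subseteq> {..d}" unfolding badset_def by auto
  hence "freeset d (\<lambda>_. None) \<inter> badset d = badset d" unfolding fr by auto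
  moreover have "card (badset d) \<le> d div 2" using card_bad assms by simp
  ultimately have inv: "Inv d (d + 1) (\<lambda>_. None)" unfolding Inv_def fr by simp
  have "d + 1 \<ge> 1" by simp
  from game[OF d5 this inv] show ?thesis .
qed


end
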